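(* Let $\Phi(x,y)=-\phi(x-y)$. For any proper, lsc, convex $f:\mathbb R^n\to\overline{\mathbb R}$ the following are equivalent: (i) $f$ is a-smooth; (ii) $-f$ is left $\Phi$-convex; (iii) $f^*-\phi^*$ is convex (i.e. $f^*$ is B-strongly convex relative to $\phi^*$); (iv) $f=g\,\square\,\phi$ for some proper, lsc, convex $g:\mathbb R^n\to\overline{\mathbb R}$; (v) $-f$ is a-weakly convex.
   Context: Standing assumption: $\phi:\mathbb R^n\to\mathbb R$ is convex, finite-valued, differentiable and strictly convex (Legendre with full domain), super-coercive; $\phi^*$ has the same properties and $\nabla\phi^*=(\nabla\phi)^{-1}$. Infimal convolution: $(g\,\square\,\phi)(x)=\inf_y g(y)+\phi(x-y)$. A proper lsc $h$ is a-weakly convex if for every $(\bar x,\bar v)\in\operatorname{graph}\partial h$ ($\partial$ the limiting subdifferential): $h(x)\ge h(\bar x)-\phi(x-\bar x+\nabla\phi^*(-\bar v))+\phi(\nabla\phi^*(-\bar v))$ for all $x$; $f$ is a-smooth if $f$ is real-valued and continuously differentiable and both $f$ and $-f$ are a-weakly convex. Left $\Phi$-convex: $h=\sup_{i\in I}\Phi(\cdot,y_i)-\beta_i$ for some family $(y_i,\beta_i)\in\mathbb R^n\times\overline{\mathbb R}$. *)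

theory Defs
  imports "HOL-Analysis.Analysis" "HOL-Library.Extended_Real"
begin

definition proper_fun :: "('a \<Rightarrow> ereal) \<Rightarrow> bool" where
  "proper_fun f \<longleftrightarrow> (\<forall>x. f x \<noteq> -\<infinity>) \<and> (\<exists>x. f x \<noteq> \<infinity>)"

definition lsc_fun :: "('a::topological_space \<Rightarrow> ereal) \<Rightarrow> bool" where
  "lsc_fun f \<longleftrightarrow> (\<forall>x. f x \<le> Liminf (at x) f)"

text \<open>Convexity of an extended-real-valued function (for functions never equal to minus infinity
  this is convexity of the epigraph).\<close>
definition ereal_convex :: "('a::real_vector \<Rightarrow> ereal) \<Rightarrow> bool" where
  "ereal_convex f \<longleftrightarrow> (\<forall>x y t. 0 < t \<and> t < 1 \<longrightarrow>
      f (t *\<^sub>R x + (1 - t) *\<^sub>R y) \<le> ereal t * f x + ereal (1 - t) * f y)"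

definition strictly_convex :: "('a::real_vector \<Rightarrow> real) \<Rightarrow> bool" where
  "strictly_convex f \<longleftrightarrow> (\<forall>x y t. x \<noteq> y \<and> 0 < t \<and> t < 1 \<longrightarrow>
      f (t *\<^sub>R x + (1 - t) *\<^sub>R y) < t * f x + (1 - t) * f y)"

definition super_coercive :: "('a::real_normed_vector \<Rightarrow> real) \<Rightarrow> bool" where
  "super_coercive f \<longleftrightarrow> filterlim (\<lambda>x. f x / norm x) at_top at_infinity"

definition fconj :: "('a::real_inner \<Rightarrow> ereal) \<Rightarrow> 'a \<Rightarrow> ereal" where
  "fconj f v = (SUP x. ereal (v \<bullet> x) - f x)"

definition infconv :: "('a::real_vector \<Rightarrow> ereal) \<Rightarrow> ('a \<Rightarrow> real) \<Rightarrow> 'a \<Rightarrow> ereal" where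
  "infconv g \<phi> x = (INF y. g y + ereal (\<phi> (x - y)))"

text \<open>Regular (Frechet) subdifferential, written out via its epsilon-delta unfolding
  of  liminf_{y->x} (h y - h x - <v,y-x>)/|y-x| >= 0.\<close>
definition frechet_subdiff :: "('a::real_inner \<Rightarrow> ereal) \<Rightarrow> 'a \<Rightarrow> 'a set" where
  "frechet_subdiff h x = {v. \<bar>h x\<bar> \<noteq> \<infinity> \<and>
     (\<forall>e>0. \<exists>d>0. \<forall>y. norm (y - x) < d \<longrightarrow>
        h x + ereal (v \<bullet> (y - x)) - ereal (e * norm (y - x)) \<le> h y)}"

definition limiting_subdiff :: "('a::real_inner \<Rightarrow> ereal) \<Rightarrow> 'a \<Rightarrow> 'a set" where
  "limiting_subdiff h x = {v. \<exists>xs vs. xs \<longlonglongrightarrow> x \<and> (\<lambda>k. h (xs k)) \<longlonglongrightarrow> h x \<and>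
       (\<forall>k. vs k \<in> frechet_subdiff h (xs k)) \<and> vs \<longlonglongrightarrow> v}"

text \<open>a-weak convexity w.r.t. phi; Dphis is the gradient of the conjugate phi*.\<close>
definition a_weakly_convex ::
  "('a::real_inner \<Rightarrow> real) \<Rightarrow> ('a \<Rightarrow> 'a) \<Rightarrow> ('a \<Rightarrow> ereal) \<Rightarrow> bool" where
  "a_weakly_convex \<phi> Dphis h \<longleftrightarrow> proper_fun h \<and> lsc_fun h \<and>
     (\<forall>xb vb. vb \<in> limiting_subdiff h xb \<longrightarrow>
        (\<forall>x. h x \<ge> h xb - ereal (\<phi> (x - xb + Dphis (- vb))) + ereal (\<phi> (Dphis (- vb)))))"

definition a_smooth ::
  "('a::real_inner \<Rightarrow> real) \<Rightarrow> ('a \<Rightarrow> 'a) \<Rightarrow> ('a \<Rightarrow> ereal) \<Rightarrow> bool" where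
  "a_smooth \<phi> Dphis f \<longleftrightarrow> (\<forall>x. \<bar>f x\<bar> \<noteq> \<infinity>) \<and>
     (\<exists>G. (\<forall>x. ((\<lambda>z. real_of_ereal (f z)) has_derivative (\<lambda>h. G x \<bullet> h)) (at x))
          \<and> continuous_on UNIV G) \<and>
     a_weakly_convex \<phi> Dphis f \<and> a_weakly_convex \<phi> Dphis (\<lambda>x. - f x)"

text \<open>Left Phi-convexity for the coupling Phi(x,y) = - phi(x - y): h is a pointwise supremum
  of functions Phi(., y_i) - beta_i over some family (y_i, beta_i) in R^n x ereal
  (the family is represented by its set of pairs).\<close>
definition left_Phi_convex :: "('a::real_vector \<Rightarrow> real) \<Rightarrow> ('a \<Rightarrow> ereal) \<Rightarrow> bool" where
  "left_Phi_convex \<phi> h \<longleftrightarrow> (\<exists>S :: ('a \<times> ereal) set.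
     \<forall>x. h x = (SUP p\<in>S. ereal (- \<phi> (x - fst p)) - snd p))"

end

theory Submission
  imports Defs
begin

lemma lsc_iff:
  fixes f :: "'a::metric_space \<Rightarrow> ereal"
  shows "lsc_fun f \<longleftrightarrow> (\<forall>x (c::real). ereal c < f x \<longrightarrow> (\<exists>e>0. \<forall>y. dist y x < e \<longrightarrow> ereal c < f y))"
proof
  assume L: "lsc_fun f"
  show "\<forall>x (c::real). ereal c < f x \<longrightarrow> (\<exists>e>0. \<forall>y. dist y x < e \<longrightarrow> ereal c < f y)"
  proof (intro allI impI)
    fix x c assume c: "ereal c < f x"
    have "f x = min (f x) (Liminf (at x) f)" using L unfolding lsc_fun_def by (simp add: min_def)
    also have "\<dots> = (SUP e\<in>{0<..}. INF y\<in>ball x e. f y)" by (rule min_Liminf_at)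
    finally have "ereal c < (SUP e\<in>{0<..}. INF y\<in>ball x e. f y)" using c by simp
    then obtain e where e: "e > 0" "ereal c < (INF y\<in>ball x e. f y)" by (auto simp: less_SUP_iff)
    show "\<exists>e>0. \<forall>y. dist y x < e \<longrightarrow> ereal c < f y"
      using e by (intro exI[of _ e]) (auto simp: less_INF_D dist_commute)
  qed
next
  assume R: "\<forall>x (c::real). ereal c < f x \<longrightarrow> (\<exists>e>0. \<forall>y. dist y x < e \<longrightarrow> ereal c < f y)"
  show "lsc_fun f" unfolding lsc_fun_def
  proof
    fix x
    show "f x \<le> Liminf (at x) f" unfolding Liminf_at
    proof (rule dense_le)
      fix c' assume c': "c' < f x"
      show "c' \<le> (SUP e\<in>{0<..}. INF y\<in>ball x e - {x}. f y)"
      proof (cases c')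
        case (real c)
        have "ereal c < f x" using c' real by simp
        then obtain e where e: "e > 0" "\<forall>y. dist y x < e \<longrightarrow> ereal c < f y" using R by blast
        have "c' \<le> (INF y\<in>ball x e - {x}. f y)"
          using e real by (intro INF_greatest) (auto simp: dist_commute intro: less_imp_le)
        also have "\<dots> \<le> (SUP e\<in>{0<..}. INF y\<in>ball x e - {x}. f y)" using e by (auto intro: SUP_upper)
        finally show ?thesis .
      qed (use c' in auto)
    qed
  qed
qed

lemma lsc_seq:
  fixes f :: "'a::metric_space \<Rightarrow> ereal"
  assumes "lsc_fun f" "X \<longlonglongrightarrow> x" "eventually (\<lambda>k. f (X k) \<le> ereal c) sequentially"
  shows "f x \<le> ereal c"
proof (rule ccontr)
  assume "\<not> ?thesis"
  hence "ereal c < f x" by simp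
  then obtain e where e: "e > 0" "\<forall>y. dist y x < e \<longrightarrow> ereal c < f y" using assms(1) unfolding lsc_iff by blast
  have "eventually (\<lambda>k. dist (X k) x < e) sequentially" using assms(2) e(1) by (rule tendstoD)
  with assms(3) have "eventually (\<lambda>k. False) sequentially"
    by eventually_elim (use e in force)
  thus False by simp
qed

lemma lsc_cont:
  fixes F :: "'a::metric_space \<Rightarrow> real"
  assumes "continuous_on UNIV F"
  shows "lsc_fun (\<lambda>x. ereal (F x))"
  unfolding lsc_iff
proof (intro allI impI)
  fix x c assume "ereal c < ereal (F x)"
  hence "F x - c > 0" by simp
  with assms obtain d where "d > 0" "\<forall>y. dist y x < d \<longrightarrow> dist (F y) (F x) < F x - c"
    unfolding continuous_on_iff by (metis UNIV_I)
  thus "\<exists>e>0. \<forall>y. dist y x < e \<longrightarrow> ereal c < ereal (F y)"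
    by (intro exI[of _ d]) (auto simp: dist_real_def)
qed

lemma lsc_sup_affine:
  fixes Y :: "'i \<Rightarrow> 'a::real_inner" and B :: "'i \<Rightarrow> ereal"
  shows "lsc_fun (\<lambda>v. SUP i\<in>I. ereal (v \<bullet> Y i) - B i)"
  unfolding lsc_iff
proof (intro allI impI)
  fix x c assume "ereal c < (SUP i\<in>I. ereal (x \<bullet> Y i) - B i)"
  then obtain i where i: "i \<in> I" "ereal c < ereal (x \<bullet> Y i) - B i" by (auto simp: less_SUP_iff)
  show "\<exists>e>0. \<forall>y. dist y x < e \<longrightarrow> ereal c < (SUP i\<in>I. ereal (y \<bullet> Y i) - B i)"
  proof (cases "B i")
    case (real b)
    with i have gap: "x \<bullet> Y i - b - c > 0" by simp
    define e where "e = (x \<bullet> Y i - b - c) / (norm (Y i) + 1)"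
    have e: "e > 0" unfolding e_def using gap by (intro divide_pos_pos) (simp_all add: add_nonneg_pos)
    { fix y assume y: "dist y x < e"
      have "\<bar>y \<bullet> Y i - x \<bullet> Y i\<bar> = \<bar>(y - x) \<bullet> Y i\<bar>" by (simp add: inner_diff_left)
      also have "\<dots> \<le> norm (y - x) * norm (Y i)" by (rule Cauchy_Schwarz_ineq2)
      also have "\<dots> < e * (norm (Y i) + 1)"
      proof -
        have "norm (y - x) * norm (Y i) \<le> e * norm (Y i)"
          using y by (intro mult_right_mono) (auto simp: dist_norm)
        also have "\<dots> < e * (norm (Y i) + 1)" using e by simp
        finally show ?thesis .
      qed
      also have "\<dots> = x \<bullet> Y i - b - c" unfolding e_def
        by (metis add_nonneg_pos nonzero_divide_eq_eq norm_ge_zero order_less_irrefl zero_less_one)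
      finally have "c < y \<bullet> Y i - b" by linarith
      hence "ereal c < ereal (y \<bullet> Y i) - B i" using real by simp
      also have "\<dots> \<le> (SUP i\<in>I. ereal (y \<bullet> Y i) - B i)" using i by (auto intro: SUP_upper)
      finally have "ereal c < (SUP i\<in>I. ereal (y \<bullet> Y i) - B i)" . }
    with e show ?thesis by blast
  next
    case PInf with i show ?thesis by simp
  next
    case MInf
    { fix y have "ereal c < ereal (y \<bullet> Y i) - B i" using MInf by simp
      also have "\<dots> \<le> (SUP i\<in>I. ereal (y \<bullet> Y i) - B i)" using i by (auto intro: SUP_upper)
      finally have "ereal c < (SUP i\<in>I. ereal (y \<bullet> Y i) - B i)" . }
    thus ?thesis by (intro exI[of _ 1]) auto
  qed
qed

lemma convex_sup_affine:
  fixes Y :: "'i \<Rightarrow> 'a::real_inner" and B :: "'i \<Rightarrow> ereal"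
  shows "ereal_convex (\<lambda>v. SUP i\<in>I. ereal (v \<bullet> Y i) - B i)"
  unfolding ereal_convex_def
proof (intro allI impI)
  fix x y :: 'a and t :: real assume t: "0 < t \<and> t < 1"
  let ?S = "\<lambda>v. SUP i\<in>I. ereal (v \<bullet> Y i) - B i"
  show "?S (t *\<^sub>R x + (1 - t) *\<^sub>R y) \<le> ereal t * ?S x + ereal (1 - t) * ?S y"
  proof (rule SUP_least)
    fix i assume i: "i \<in> I"
    have le: "ereal ((t *\<^sub>R x + (1 - t) *\<^sub>R y) \<bullet> Y i) - B i
        \<le> ereal t * (ereal (x \<bullet> Y i) - B i) + ereal (1 - t) * (ereal (y \<bullet> Y i) - B i)"
    proof (cases "B i")
      case (real b)
      thus ?thesis by (simp add: inner_add_left algebra_simps)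
    qed (use t in auto)
    also have "\<dots> \<le> ereal t * ?S x + ereal (1 - t) * ?S y"
      using t i by (intro add_mono ereal_mult_left_mono SUP_upper) auto
    finally show "ereal ((t *\<^sub>R x + (1 - t) *\<^sub>R y) \<bullet> Y i) - B i \<le> ereal t * ?S x + ereal (1 - t) * ?S y" .
  qed
qed

lemma fconj_sup: "fconj F v = (SUP x\<in>UNIV. ereal (v \<bullet> id x) - F x)"
  by (simp add: fconj_def)

lemma fconj_sup': "fconj F = (\<lambda>v. SUP x\<in>UNIV. ereal (v \<bullet> id x) - F x)"
  by (simp add: fconj_def fun_eq_iff)

lemma fconj_lsc: "lsc_fun (fconj (F::'a::real_inner \<Rightarrow> ereal))"
  unfolding fconj_sup' by (rule lsc_sup_affine)

lemma fconj_convex: "ereal_convex (fconj (F::'a::real_inner \<Rightarrow> ereal))"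
  unfolding fconj_sup' by (rule convex_sup_affine)

definition epi :: "('a \<Rightarrow> ereal) \<Rightarrow> ('a \<times> real) set" where
  "epi F = {p. F (fst p) \<le> ereal (snd p)}"

lemma epi_closed:
  fixes F :: "'a::metric_space \<Rightarrow> ereal"
  assumes "lsc_fun F" shows "closed (epi F)"
  unfolding closed_sequential_limits
proof (intro allI impI, elim conjE)
  fix X l assume X: "\<forall>n. X n \<in> epi F" and l: "X \<longlonglongrightarrow> l"
  have f: "(\<lambda>n. fst (X n)) \<longlonglongrightarrow> fst l" and s: "(\<lambda>n. snd (X n)) \<longlonglongrightarrow> snd l"
    using tendsto_fst[OF l] tendsto_snd[OF l] by auto
  have "F (fst l) \<le> ereal (snd l) + ereal e" if e: "e > 0" for e
  proof -
    have "eventually (\<lambda>n. snd (X n) < snd l + e) sequentially"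
    proof -
      have "eventually (\<lambda>n. dist (snd (X n)) (snd l) < e) sequentially" using s e by (rule tendstoD)
      thus ?thesis by eventually_elim (simp add: dist_real_def)
    qed
    hence "eventually (\<lambda>n. F (fst (X n)) \<le> ereal (snd l + e)) sequentially"
    proof eventually_elim
      case (elim n)
      have "F (fst (X n)) \<le> ereal (snd (X n))" using X by (simp add: epi_def)
      also have "\<dots> \<le> ereal (snd l + e)" using elim by simp
      finally show ?case .
    qed
    from lsc_seq[OF assms f this] show ?thesis by simp
  qed
  hence "F (fst l) \<le> ereal (snd l)" by (rule ereal_le_epsilon2) auto
  thus "l \<in> epi F" by (simp add: epi_def)
qed

lemma epi_convex:
  fixes F :: "'a::real_vector \<Rightarrow> ereal"
  assumes "ereal_convex F" shows "convex (epi F)"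
  unfolding convex_def
proof (intro ballI allI impI)
  fix p q :: "'a \<times> real" and u v :: real
  assume p: "p \<in> epi F" and q: "q \<in> epi F" and u: "0 \<le> u" and v: "0 \<le> v" and uv: "u + v = 1"
  show "u *\<^sub>R p + v *\<^sub>R q \<in> epi F"
  proof (cases "u = 0 \<or> v = 0")
    case True thus ?thesis using p q uv by auto
  next
    case False
    hence t: "0 < u \<and> u < 1" using u v uv by auto
    have v': "v = 1 - u" using uv by simp
    have "F (u *\<^sub>R fst p + (1 - u) *\<^sub>R fst q) \<le> ereal u * F (fst p) + ereal (1 - u) * F (fst q)"
      using assms t unfolding ereal_convex_def by blast
    also have "\<dots> \<le> ereal u * ereal (snd p) + ereal (1 - u) * ereal (snd q)"
      using p q t by (intro add_mono ereal_mult_left_mono) (auto simp: epi_def)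
    finally show ?thesis using v' by (simp add: epi_def)
  qed
qed

lemma sep_core:
  fixes F :: "'a::euclidean_space \<Rightarrow> ereal"
  assumes "lsc_fun F" "ereal_convex F" "ereal r < F x0"
  shows "\<exists>a1 a0 b. a1 \<bullet> x0 + a0 * r < b \<and> (\<forall>x t. F x \<le> ereal t \<longrightarrow> a1 \<bullet> x + a0 * t > b)"
proof -
  have "(x0, r) \<notin> epi F" using assms(3) by (simp add: epi_def)
  from separating_hyperplane_closed_point[OF epi_convex[OF assms(2)] epi_closed[OF assms(1)] this]
  obtain a b where ab: "a \<bullet> (x0, r) < b" "\<forall>p\<in>epi F. b < a \<bullet> p" by blast
  obtain a1 a0 where a: "a = (a1, a0)" by (cases a)
  show ?thesis
    using ab by (intro exI[of _ a1] exI[of _ a0] exI[of _ b]) (auto simp: a epi_def inner_Pair)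
qed

lemma a0_nonneg:
  fixes F :: "'a::euclidean_space \<Rightarrow> ereal"
  assumes "proper_fun F" "\<forall>x t. F x \<le> ereal t \<longrightarrow> a1 \<bullet> x + a0 * t > b"
  shows "a0 \<ge> 0"
proof (rule ccontr)
  assume neg: "\<not> a0 \<ge> 0"
  obtain x1 where x1: "F x1 \<noteq> \<infinity>" using assms(1) by (auto simp: proper_fun_def)
  moreover have "F x1 \<noteq> -\<infinity>" using assms(1) by (auto simp: proper_fun_def)
  ultimately obtain s where s: "F x1 = ereal s" by (cases "F x1") auto
  define K where "K = a1 \<bullet> x1 + a0 * s - b"
  have K: "K > 0" using assms(2) s by (auto simp: K_def)
  define t where "t = s + K / (- a0)"
  have "K / (- a0) > 0" using K neg by (intro divide_pos_pos) auto
  hence "s \<le> t" by (simp add: t_def)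
  hence "F x1 \<le> ereal t" using s by simp
  hence "a1 \<bullet> x1 + a0 * t > b" using assms(2) by blast
  moreover have "a1 \<bullet> x1 + a0 * t = b" using neg by (simp add: t_def K_def field_simps)
  ultimately show False by simp
qed

lemma nonvert:
  fixes F :: "'a::euclidean_space \<Rightarrow> ereal"
  assumes "proper_fun F" "a0 > 0" "\<forall>x t. F x \<le> ereal t \<longrightarrow> a1 \<bullet> x + a0 * t > b"
  shows "ereal ((- (1/a0)) *\<^sub>R a1 \<bullet> x + b / a0) \<le> F x"
proof (cases "F x")
  case (real t)
  hence "a1 \<bullet> x + a0 * t > b" using assms(3) by auto
  hence "(- (1/a0)) *\<^sub>R a1 \<bullet> x + b / a0 < t" using assms(2) by (simp add: field_simps)
  thus ?thesis using real by simp
next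
  case MInf thus ?thesis using assms(1) by (auto simp: proper_fun_def)
qed simp

lemma minorant_exists:
  fixes F :: "'a::euclidean_space \<Rightarrow> ereal"
  assumes "proper_fun F" "lsc_fun F" "ereal_convex F"
  shows "\<exists>c d. \<forall>x. ereal (c \<bullet> x + d) \<le> F x"
proof -
  obtain x1 where x1: "F x1 \<noteq> \<infinity>" using assms(1) by (auto simp: proper_fun_def)
  moreover have "F x1 \<noteq> -\<infinity>" using assms(1) by (auto simp: proper_fun_def)
  ultimately obtain s where s: "F x1 = ereal s" by (cases "F x1") auto
  have "ereal (s - 1) < F x1" using s by simp
  from sep_core[OF assms(2,3) this] obtain a1 a0 b where
    ab: "a1 \<bullet> x1 + a0 * (s - 1) < b" "\<forall>x t. F x \<le> ereal t \<longrightarrow> a1 \<bullet> x + a0 * t > b" by blast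
  have "a1 \<bullet> x1 + a0 * s > b" using ab(2) s by auto
  with ab(1) have "a0 > 0" by (simp add: algebra_simps)
  from nonvert[OF assms(1) this ab(2)] show ?thesis by blast
qed

lemma affine_sep:
  fixes F :: "'a::euclidean_space \<Rightarrow> ereal"
  assumes "proper_fun F" "lsc_fun F" "ereal_convex F" "ereal r < F x0"
  shows "\<exists>c d. (\<forall>x. ereal (c \<bullet> x + d) \<le> F x) \<and> r < c \<bullet> x0 + d"
proof -
  from sep_core[OF assms(2,3,4)] obtain a1 a0 b where
    ab: "a1 \<bullet> x0 + a0 * r < b" "\<forall>x t. F x \<le> ereal t \<longrightarrow> a1 \<bullet> x + a0 * t > b" by blast
  have a0: "a0 \<ge> 0" by (rule a0_nonneg[OF assms(1) ab(2)])
  show ?thesis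
  proof (cases "a0 > 0")
    case True
    have "r < (- (1/a0)) *\<^sub>R a1 \<bullet> x0 + b / a0" using ab(1) True by (simp add: field_simps)
    with nonvert[OF assms(1) True ab(2)] show ?thesis by blast
  next
    case False
    hence z: "a0 = 0" using a0 by simp
    obtain c d where cd: "\<forall>x. ereal (c \<bullet> x + d) \<le> F x" using minorant_exists[OF assms(1-3)] by blast
    have gap: "b - a1 \<bullet> x0 > 0" using ab(1) z by simp
    define lam where "lam = max 0 ((r - c \<bullet> x0 - d) / (b - a1 \<bullet> x0)) + 1"
    have lam: "lam > 0" "lam * (b - a1 \<bullet> x0) > r - c \<bullet> x0 - d"
    proof -
      show "lam > 0" by (simp add: lam_def add_nonneg_pos)
      have "(r - c \<bullet> x0 - d) / (b - a1 \<bullet> x0) < lam" by (simp add: lam_def)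
      thus "lam * (b - a1 \<bullet> x0) > r - c \<bullet> x0 - d" using gap by (simp add: pos_divide_less_eq)
    qed
    have "\<forall>x. ereal ((c - lam *\<^sub>R a1) \<bullet> x + (d + lam * b)) \<le> F x"
    proof
      fix x show "ereal ((c - lam *\<^sub>R a1) \<bullet> x + (d + lam * b)) \<le> F x"
      proof (cases "F x = \<infinity>")
        case False
        then obtain t where "F x \<le> ereal t" by (cases "F x") auto
        hence "a1 \<bullet> x > b" using ab(2) z by auto
        hence "(c - lam *\<^sub>R a1) \<bullet> x + (d + lam * b) \<le> c \<bullet> x + d"
          using lam(1) by (simp add: inner_diff_left algebra_simps mult_left_mono)
        thus ?thesis using cd[rule_format, of x] by (meson ereal_less_eq(3) order.trans)
      qed simp
    qed
    moreover have "r < (c - lam *\<^sub>R a1) \<bullet> x0 + (d + lam * b)"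
      using lam(2) by (simp add: inner_diff_left algebra_simps)
    ultimately show ?thesis by blast
  qed
qed

lemma fconj_ge: "ereal (v \<bullet> x) - F x \<le> fconj F v"
  unfolding fconj_def by (rule SUP_upper) simp

lemma FM:
  fixes F :: "'a::euclidean_space \<Rightarrow> ereal"
  assumes "proper_fun F" "lsc_fun F" "ereal_convex F"
  shows "fconj (fconj F) x = F x"
proof (rule antisym)
  show "fconj (fconj F) x \<le> F x" unfolding fconj_def[of "fconj F"]
  proof (rule SUP_least)
    fix v assume "v \<in> (UNIV::'a set)"
    have le: "ereal (v \<bullet> x) - F x \<le> fconj F v" by (rule fconj_ge)
    have "F x \<noteq> -\<infinity>" using assms(1) by (auto simp: proper_fun_def)
    thus "ereal (x \<bullet> v) - fconj F v \<le> F x"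
      using le by (cases "F x"; cases "fconj F v") (simp_all add: inner_commute)
  qed
next
  show "F x \<le> fconj (fconj F) x"
  proof (rule dense_le)
    fix c' assume c': "c' < F x"
    show "c' \<le> fconj (fconj F) x"
    proof (cases c')
      case (real r)
      with c' obtain c d where cd: "\<forall>y. ereal (c \<bullet> y + d) \<le> F y" "r < c \<bullet> x + d"
        using affine_sep[OF assms] by blast
      have "fconj F c \<le> ereal (- d)" unfolding fconj_def
      proof (rule SUP_least)
        fix y show "ereal (c \<bullet> y) - F y \<le> ereal (- d)"
          using cd(1)[rule_format, of y] by (cases "F y") auto
      qed
      hence "ereal (x \<bullet> c) - ereal (- d) \<le> ereal (x \<bullet> c) - fconj F c"
        by (intro ereal_minus_mono) auto
      also have "\<dots> \<le> fconj (fconj F) x" by (rule fconj_ge)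
      finally have "ereal (c \<bullet> x + d) \<le> fconj (fconj F) x" by (simp add: inner_commute)
      moreover have "ereal r \<le> ereal (c \<bullet> x + d)" using cd(2) by simp
      ultimately show ?thesis using real by (metis order.trans)
    qed (use c' in auto)
  qed
qed

lemma convex_real:
  fixes f :: "'a::real_vector \<Rightarrow> ereal"
  assumes fin: "\<And>x. \<bar>f x\<bar> \<noteq> \<infinity>" and cv: "ereal_convex f"
  shows "convex_on UNIV (\<lambda>x. real_of_ereal (f x))"
proof (rule convex_onI)
  fix t :: real and x y :: 'a assume t: "0 < t" "t < 1"
  have "f (t *\<^sub>R y + (1 - t) *\<^sub>R x) \<le> ereal t * f y + ereal (1 - t) * f x"
    using cv t unfolding ereal_convex_def by blast
  moreover have "f y = ereal (real_of_ereal (f y))" "f x = ereal (real_of_ereal (f x))"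
    "f (t *\<^sub>R y + (1 - t) *\<^sub>R x) = ereal (real_of_ereal (f (t *\<^sub>R y + (1 - t) *\<^sub>R x)))"
    using fin by (simp_all add: ereal_real)
  ultimately have "real_of_ereal (f (t *\<^sub>R y + (1 - t) *\<^sub>R x))
      \<le> t * real_of_ereal (f y) + (1 - t) * real_of_ereal (f x)"
    by (metis ereal_less_eq(3) plus_ereal.simps(1) times_ereal.simps(1))
  thus "real_of_ereal (f ((1 - t) *\<^sub>R x + t *\<^sub>R y))
      \<le> (1 - t) * real_of_ereal (f x) + t * real_of_ereal (f y)"
    by (simp add: add.commute)
next
  show "convex (UNIV::'a set)" by simp
qed

lemma dirderiv:
  assumes "(F has_derivative (\<lambda>h. D \<bullet> h)) (at z)"
  shows "((\<lambda>t. (F (z + t *\<^sub>R w) - F z) / t) \<longlongrightarrow> D \<bullet> w) (at_right 0)"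
proof -
  have l: "((\<lambda>t::real. z + t *\<^sub>R w) has_derivative (\<lambda>t. t *\<^sub>R w)) (at 0)"
    by (auto intro!: derivative_eq_intros)
  have F0: "(F has_derivative (\<lambda>h. D \<bullet> h)) (at (z + 0 *\<^sub>R w))" using assms by simp
  have "((\<lambda>t. F (z + t *\<^sub>R w)) has_derivative (\<lambda>t. D \<bullet> (t *\<^sub>R w))) (at 0)"
    using has_derivative_compose[OF l F0] by simp
  moreover have "(\<lambda>t. D \<bullet> (t *\<^sub>R w)) = (*) (D \<bullet> w)" by (auto simp: fun_eq_iff)
  ultimately have "((\<lambda>t. F (z + t *\<^sub>R w)) has_real_derivative (D \<bullet> w)) (at 0)"
    by (simp add: has_field_derivative_def)
  hence "((\<lambda>h. (F (z + (0 + h) *\<^sub>R w) - F (z + 0 *\<^sub>R w)) / h) \<longlongrightarrow> D \<bullet> w) (at 0)"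
    unfolding DERIV_def .
  hence "((\<lambda>h. (F (z + h *\<^sub>R w) - F z) / h) \<longlongrightarrow> D \<bullet> w) (at 0)" by simp
  thus ?thesis by (simp add: filterlim_at_split)
qed

lemma grad_ineq:
  assumes cv: "convex_on UNIV F" and d: "(F has_derivative (\<lambda>h. D \<bullet> h)) (at x)"
  shows "F x + D \<bullet> (y - x) \<le> F y"
proof -
  have lim: "((\<lambda>t. (F (x + t *\<^sub>R (y - x)) - F x) / t) \<longlongrightarrow> D \<bullet> (y - x)) (at_right 0)"
    by (rule dirderiv[OF d])
  have "eventually (\<lambda>t. (F (x + t *\<^sub>R (y - x)) - F x) / t \<le> F y - F x) (at_right (0::real))"
    unfolding eventually_at_right_field
  proof (intro exI[of _ 1] conjI allI impI)
    fix t :: real assume t: "0 < t" "t < 1"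
    have "F ((1 - t) *\<^sub>R x + t *\<^sub>R y) \<le> (1 - t) * F x + t * F y"
      using convex_onD[OF cv, of t x y] t by simp
    moreover have "(1 - t) *\<^sub>R x + t *\<^sub>R y = x + t *\<^sub>R (y - x)" by (simp add: algebra_simps)
    ultimately have "F (x + t *\<^sub>R (y - x)) - F x \<le> t * (F y - F x)" by (simp add: algebra_simps)
    thus "(F (x + t *\<^sub>R (y - x)) - F x) / t \<le> F y - F x" using t by (simp add: divide_le_eq mult.commute)
  qed simp
  from tendsto_upperbound[OF lim this] have "D \<bullet> (y - x) \<le> F y - F x" by simp
  thus ?thesis by simp
qed

lemma le_eps_imp:
  fixes a c b :: real
  assumes "\<And>e. e > 0 \<Longrightarrow> a - e * b \<le> c" "b \<ge> 0"
  shows "a \<le> c"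
proof (rule ccontr)
  assume "\<not> a \<le> c"
  hence g: "a - c > 0" by simp
  define e where "e = (a - c) / (2 * (b + 1))"
  have e: "e > 0" using g assms(2) by (simp add: e_def)
  have "e * b < a - c"
  proof -
    have "e * b \<le> e * (b + 1)" using e by simp
    also have "\<dots> = (a - c) / 2" using assms(2) by (simp add: e_def field_simps)
    finally show ?thesis using g by simp
  qed
  with assms(1)[OF e] show False by simp
qed

lemma L1:
  assumes d: "(F has_derivative (\<lambda>h. D \<bullet> h)) (at z)"
    and s: "\<And>e. e > 0 \<Longrightarrow> \<exists>d>0. \<forall>h. norm h < d \<longrightarrow> s \<bullet> h - e * norm h \<le> F (z + h) - F z"
  shows "s = D"
proof -
  define w where "w = s - D"
  have lim: "((\<lambda>t. (F (z + t *\<^sub>R w) - F z) / t) \<longlongrightarrow> D \<bullet> w) (at_right 0)"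
    by (rule dirderiv[OF d])
  have "s \<bullet> w - e * norm w \<le> D \<bullet> w" if e: "e > 0" for e
  proof -
    obtain d where dd: "d > 0" "\<forall>h. norm h < d \<longrightarrow> s \<bullet> h - e * norm h \<le> F (z + h) - F z"
      using s[OF e] by blast
    have "eventually (\<lambda>t. s \<bullet> w - e * norm w \<le> (F (z + t *\<^sub>R w) - F z) / t) (at_right (0::real))"
      unfolding eventually_at_right_field
    proof (intro exI[of _ "d / (norm w + 1)"] conjI allI impI)
      show "0 < d / (norm w + 1)" using dd by (simp add: add_nonneg_pos)
      fix t :: real assume t: "0 < t" "t < d / (norm w + 1)"
      have "norm (t *\<^sub>R w) < d"
      proof -
        have "norm (t *\<^sub>R w) = t * norm w" using t by simp
        also have "\<dots> \<le> t * (norm w + 1)" using t by simp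
        also have "\<dots> < d" using t by (simp add: pos_less_divide_eq add_nonneg_pos)
        finally show ?thesis .
      qed
      hence "s \<bullet> (t *\<^sub>R w) - e * norm (t *\<^sub>R w) \<le> F (z + t *\<^sub>R w) - F z" using dd by blast
      hence "t * (s \<bullet> w - e * norm w) \<le> F (z + t *\<^sub>R w) - F z" using t by (simp add: algebra_simps)
      thus "s \<bullet> w - e * norm w \<le> (F (z + t *\<^sub>R w) - F z) / t" using t by (simp add: le_divide_eq mult.commute)
    qed
    from tendsto_lowerbound[OF lim this] show ?thesis by simp
  qed
  hence "s \<bullet> w \<le> D \<bullet> w" by (rule le_eps_imp[where b="norm w"]) auto
  hence "w \<bullet> w \<le> 0" by (simp add: w_def inner_diff_left)
  hence "w = 0" by (metis inner_gt_zero_iff not_le)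
  thus ?thesis by (simp add: w_def)
qed

lemma slope:
  assumes cv: "convex_on UNIV F" and t: "0 < t" "t \<le> R"
  shows "F (x + t *\<^sub>R u) - F x \<le> (t / R) * (F (x + R *\<^sub>R u) - F x)"
proof -
  have R: "R > 0" using t by simp
  let ?l = "t / R"
  have l: "0 \<le> ?l" "?l \<le> 1" using t R by auto
  have "F ((1 - ?l) *\<^sub>R x + ?l *\<^sub>R (x + R *\<^sub>R u)) \<le> (1 - ?l) * F x + ?l * F (x + R *\<^sub>R u)"
    using convex_onD[OF cv l] by simp
  moreover have "?l *\<^sub>R (x + R *\<^sub>R u) = ?l *\<^sub>R x + t *\<^sub>R u" using R by (simp add: scaleR_add_right)
  moreover have "(1 - ?l) *\<^sub>R x + ?l *\<^sub>R x = x" by (simp flip: scaleR_add_left)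
  ultimately have "F (x + t *\<^sub>R u) \<le> (1 - ?l) * F x + ?l * F (x + R *\<^sub>R u)"
    by (metis (no_types, lifting) add.assoc)
  moreover have "(t / R) * (F (x + R *\<^sub>R u) - F x) = (1 - ?l) * F x + ?l * F (x + R *\<^sub>R u) - F x"
    by (simp add: algebra_simps)
  ultimately show ?thesis by linarith
qed

lemma midpoint_cv:
  assumes cv: "convex_on UNIV F"
  shows "2 * F x \<le> F (x + h) + F (x - h)"
proof -
  have "F ((1 - 1/2) *\<^sub>R (x + h) + (1/2) *\<^sub>R (x - h)) \<le> (1 - 1/2) * F (x + h) + (1/2) * F (x - h)"
    using convex_onD[OF cv, of "1/2"] by simp
  moreover have "(1 - 1/2) *\<^sub>R (x + h) + (1/2::real) *\<^sub>R (x - h) = x"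
    by (simp add: algebra_simps) (metis scaleR_add_left field_sum_of_halves scaleR_one)
  ultimately show ?thesis by simp
qed

lemma FSG:
  assumes cv: "convex_on UNIV F"
    and fr: "\<And>e. e > 0 \<Longrightarrow> \<exists>d>0. \<forall>y. norm (y - x) < d \<longrightarrow> F x + v \<bullet> (y - x) - e * norm (y - x) \<le> F y"
  shows "F x + v \<bullet> (w - x) \<le> F w"
proof (cases "w = x")
  case False
  hence nz: "norm (w - x) > 0" by simp
  have "v \<bullet> (w - x) - e * norm (w - x) \<le> F w - F x" if e: "e > 0" for e
  proof -
    obtain d where d: "d > 0" "\<forall>y. norm (y - x) < d \<longrightarrow> F x + v \<bullet> (y - x) - e * norm (y - x) \<le> F y"
      using fr[OF e] by blast
    define t where "t = min (1/2) (d / (2 * norm (w - x)))"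
    have t: "0 < t" "t \<le> 1/2" using d nz by (auto simp: t_def)
    have "t * norm (w - x) \<le> d / 2" using nz
      by (simp add: t_def min_def field_simps split: if_split_asm)
    hence "norm ((x + t *\<^sub>R (w - x)) - x) < d" using t d by simp
    hence A: "F x + v \<bullet> (t *\<^sub>R (w - x)) - e * norm (t *\<^sub>R (w - x)) \<le> F (x + t *\<^sub>R (w - x))"
      using d by fastforce
    have "F ((1 - t) *\<^sub>R x + t *\<^sub>R w) \<le> (1 - t) * F x + t * F w"
      using convex_onD[OF cv, of t x w] t by simp
    moreover have "(1 - t) *\<^sub>R x + t *\<^sub>R w = x + t *\<^sub>R (w - x)" by (simp add: algebra_simps)
    ultimately have B: "F (x + t *\<^sub>R (w - x)) \<le> (1 - t) * F x + t * F w" by simp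
    have A': "F x + t * (v \<bullet> (w - x)) - e * (t * norm (w - x)) \<le> F (x + t *\<^sub>R (w - x))"
      using A t by simp
    have e1: "t * (v \<bullet> (w - x) - e * norm (w - x)) = t * (v \<bullet> (w - x)) - e * (t * norm (w - x))"
      by (simp add: algebra_simps)
    have e2: "(1 - t) * F x + t * F w - F x = t * (F w - F x)" by (simp add: algebra_simps)
    from A' B e1 e2 have "t * (v \<bullet> (w - x) - e * norm (w - x)) \<le> t * (F w - F x)" by linarith
    thus ?thesis using t by simp
  qed
  hence "v \<bullet> (w - x) \<le> F w - F x" by (rule le_eps_imp[where b="norm (w - x)"]) auto
  thus ?thesis by simp
qed simp

lemma SW:
  fixes F M :: "'a::euclidean_space \<Rightarrow> real"
  assumes cv: "convex_on UNIV F" and dM: "(M has_derivative (\<lambda>h. D \<bullet> h)) (at x)"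
    and eq: "F x = M x" and le: "\<And>w. F w \<le> M w"
  shows "(F has_derivative (\<lambda>h. D \<bullet> h)) (at x)"
proof -
  define EM where "EM h = \<bar>M (x + h) - M x - D \<bullet> h\<bar> / norm h" for h
  have l1: "(EM \<longlongrightarrow> 0) (at 0)" using dM unfolding has_derivative_at EM_def by simp
  have "((EM \<circ> uminus) \<longlongrightarrow> 0) (at 0)"
    unfolding tendsto_compose_filtermap using l1 filtermap_at_minus[where a="0::'a"] by simp
  hence l2: "((\<lambda>h. EM (- h)) \<longlongrightarrow> 0) (at 0)" by (simp add: o_def)
  have bnd: "\<bar>F (x + h) - F x - D \<bullet> h\<bar> / norm h \<le> EM h + EM (- h)" for h
  proof -
    have up: "F (x + h) - F x - D \<bullet> h \<le> \<bar>M (x + h) - M x - D \<bullet> h\<bar>" using le[of "x + h"] eq by simp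
    have "2 * F x \<le> F (x + h) + F (x - h)" by (rule midpoint_cv[OF cv])
    hence lo: "F (x + h) - F x - D \<bullet> h \<ge> - \<bar>M (x + - h) - M x - D \<bullet> (- h)\<bar>"
      using le[of "x - h"] eq by (simp add: inner_minus_right)
    have "\<bar>F (x + h) - F x - D \<bullet> h\<bar> \<le> \<bar>M (x + h) - M x - D \<bullet> h\<bar> + \<bar>M (x + - h) - M x - D \<bullet> (- h)\<bar>"
      using up lo by linarith
    hence "\<bar>F (x + h) - F x - D \<bullet> h\<bar> / norm h \<le> (\<bar>M (x + h) - M x - D \<bullet> h\<bar> + \<bar>M (x + - h) - M x - D \<bullet> (- h)\<bar>) / norm h"
      by (simp add: divide_right_mono)
    also have "\<dots> = EM h + EM (- h)" by (simp add: EM_def add_divide_distrib)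
    finally show ?thesis .
  qed
  have "((\<lambda>h. \<bar>F (x + h) - F x - D \<bullet> h\<bar> / norm h) \<longlongrightarrow> 0) (at 0)"
  proof (rule tendsto_sandwich[of "\<lambda>_. 0" _ _ "\<lambda>h. EM h + EM (- h)"])
    show "\<forall>\<^sub>F h in at 0. 0 \<le> \<bar>F (x + h) - F x - D \<bullet> h\<bar> / norm h" by simp
    show "\<forall>\<^sub>F h in at 0. \<bar>F (x + h) - F x - D \<bullet> h\<bar> / norm h \<le> EM h + EM (- h)" using bnd by simp
    show "((\<lambda>_. 0::real) \<longlongrightarrow> 0) (at 0)" by simp
    show "((\<lambda>h. EM h + EM (- h)) \<longlongrightarrow> 0) (at 0)" using tendsto_add[OF l1 l2] by simp
  qed
  thus ?thesis unfolding has_derivative_at by (simp add: bounded_linear_inner_right)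
qed

lemma GC:
  fixes F :: "'a::euclidean_space \<Rightarrow> real"
  assumes cv: "convex_on UNIV F" and d: "\<And>x. (F has_derivative (\<lambda>h. G x \<bullet> h)) (at x)"
  shows "continuous_on UNIV G"
proof -
  have cF: "continuous_on UNIV F" by (rule convex_on_continuous[OF open_UNIV cv])
  have comp: "continuous_on UNIV (\<lambda>x. G x \<bullet> u)" for u
    unfolding continuous_on_iff
  proof (intro ballI allI impI)
    fix x0 :: 'a and e :: real assume e: "e > 0"
    have l1: "((\<lambda>t. (F (x0 + t *\<^sub>R u) - F x0) / t) \<longlongrightarrow> G x0 \<bullet> u) (at_right 0)"
      by (rule dirderiv[OF d])
    have l2: "((\<lambda>t. (F (x0 + t *\<^sub>R (- u)) - F x0) / t) \<longlongrightarrow> G x0 \<bullet> (- u)) (at_right 0)"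
      by (rule dirderiv[OF d])
    have "eventually (\<lambda>t. dist ((F (x0 + t *\<^sub>R u) - F x0) / t) (G x0 \<bullet> u) < e/2
        \<and> dist ((F (x0 + t *\<^sub>R (- u)) - F x0) / t) (G x0 \<bullet> (- u)) < e/2) (at_right (0::real))"
      using tendstoD[OF l1, of "e/2"] tendstoD[OF l2, of "e/2"] e by (auto intro: eventually_conj)
    then obtain b where b: "b > 0" "\<forall>t>0. t < b \<longrightarrow> dist ((F (x0 + t *\<^sub>R u) - F x0) / t) (G x0 \<bullet> u) < e/2
        \<and> dist ((F (x0 + t *\<^sub>R (- u)) - F x0) / t) (G x0 \<bullet> (- u)) < e/2"
      unfolding eventually_at_right_field by auto
    define t where "t = b / 2"
    have t: "t > 0" "t < b" using b by (auto simp: t_def)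
    have D1: "dist ((F (x0 + t *\<^sub>R u) - F x0) / t) (G x0 \<bullet> u) < e/2"
      and D2: "dist ((F (x0 + t *\<^sub>R (- u)) - F x0) / t) (G x0 \<bullet> (- u)) < e/2"
      using b(2) t by blast+
    have Q0: "(F (x0 + t *\<^sub>R u) - F x0) / t < G x0 \<bullet> u + e/2"
      using D1 unfolding dist_real_def abs_less_iff by linarith
    have P0: "(F (x0 + t *\<^sub>R (- u)) - F x0) / t < - (G x0 \<bullet> u) + e/2"
      using D2 unfolding dist_real_def abs_less_iff inner_minus_right by linarith
    define Q where "Q y = (F (y + t *\<^sub>R u) - F y) / t" for y
    define P where "P y = (F (y + t *\<^sub>R (- u)) - F y) / t" for y
    have cQ: "continuous_on UNIV Q" unfolding Q_def
      using t by (intro continuous_intros continuous_on_compose2[OF cF]) auto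
    have cP: "continuous_on UNIV P" unfolding P_def
      using t by (intro continuous_intros continuous_on_compose2[OF cF]) auto
    obtain d1 where d1: "d1 > 0" "\<forall>y. dist y x0 < d1 \<longrightarrow> dist (Q y) (Q x0) < e/2"
      using cQ e unfolding continuous_on_iff by (metis UNIV_I half_gt_zero)
    obtain d2 where d2: "d2 > 0" "\<forall>y. dist y x0 < d2 \<longrightarrow> dist (P y) (P x0) < e/2"
      using cP e unfolding continuous_on_iff by (metis UNIV_I half_gt_zero)
    show "\<exists>d>0. \<forall>y\<in>UNIV. dist y x0 < d \<longrightarrow> dist (G y \<bullet> u) (G x0 \<bullet> u) < e"
    proof (intro exI[of _ "min d1 d2"] conjI ballI impI)
      show "0 < min d1 d2" using d1 d2 by simp
      fix y assume y: "dist y x0 < min d1 d2"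
      have gq: "G y \<bullet> u \<le> Q y"
      proof -
        have "F y + G y \<bullet> ((y + t *\<^sub>R u) - y) \<le> F (y + t *\<^sub>R u)" by (rule grad_ineq[OF cv d])
        hence "t * (G y \<bullet> u) \<le> F (y + t *\<^sub>R u) - F y" by simp
        thus ?thesis using t by (simp add: Q_def le_divide_eq mult.commute)
      qed
      have gp: "- (G y \<bullet> u) \<le> P y"
      proof -
        have "F y + G y \<bullet> ((y + t *\<^sub>R (- u)) - y) \<le> F (y + t *\<^sub>R (- u))" by (rule grad_ineq[OF cv d])
        hence "t * (- (G y \<bullet> u)) \<le> F (y + t *\<^sub>R (- u)) - F y" by simp
        thus ?thesis using t by (simp add: P_def le_divide_eq mult.commute)
      qed
      have "dist (Q y) (Q x0) < e/2" "dist (P y) (P x0) < e/2" using d1 d2 y by auto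
      hence "Q y < Q x0 + e/2" "P y < P x0 + e/2" unfolding dist_real_def abs_less_iff by linarith+
      thus "dist (G y \<bullet> u) (G x0 \<bullet> u) < e"
        using gq gp Q0 P0 by (auto simp: dist_real_def Q_def P_def)
    qed
  qed
  have "continuous_on UNIV (\<lambda>x. \<Sum>i\<in>Basis. (G x \<bullet> i) *\<^sub>R i)"
    by (intro continuous_intros comp)
  thus ?thesis by (simp add: euclidean_representation)
qed

lemma frechet_real:
  "v \<in> frechet_subdiff (\<lambda>x. ereal (H x)) x \<longleftrightarrow>
    (\<forall>e>0. \<exists>d>0. \<forall>y. norm (y - x) < d \<longrightarrow> H x + v \<bullet> (y - x) - e * norm (y - x) \<le> H y)"
  by (simp add: frechet_subdiff_def)

lemma sq_expand: "norm (a + b)^2 = norm a ^ 2 + 2 * (a \<bullet> b) + norm (b::'a::real_inner) ^ 2"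
  using dot_norm[of a b] by simp

lemma PX1:
  fixes F :: "'a::euclidean_space \<Rightarrow> real"
  assumes cv: "convex_on UNIV F" and K: "\<And>w. w \<in> cball x0 2 \<Longrightarrow> \<bar>F w\<bar> \<le> K"
    and eps: "0 < \<epsilon>" "\<epsilon> < 1/2" "4 * \<epsilon> * K < 1/4"
  shows "\<exists>x v. norm (x - x0)^2 \<le> 4 * \<epsilon> * K \<and> v \<in> frechet_subdiff (\<lambda>x. ereal (- F x)) x \<and> norm v \<le> 2 * K + 1"
proof -
  have cF: "continuous_on UNIV F" by (rule convex_on_continuous[OF open_UNIV cv])
  define q where "q w = - F w + norm (w - x0)^2 / (2 * \<epsilon>)" for w
  have cq: "continuous_on (cball x0 1) q" unfolding q_def using eps
    by (intro continuous_intros continuous_on_subset[OF cF]) auto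
  obtain xe where xe: "xe \<in> cball x0 1" "\<And>w. w \<in> cball x0 1 \<Longrightarrow> q xe \<le> q w"
    using continuous_attains_inf[OF compact_cball _ cq] by fastforce
  have Kx: "\<bar>F xe\<bar> \<le> K" "\<bar>F x0\<bar> \<le> K" using xe(1) K by (auto simp: dist_norm)
  have "q xe \<le> q x0" using xe(2)[of x0] by simp
  hence "norm (xe - x0)^2 / (2 * \<epsilon>) \<le> F xe - F x0" by (simp add: q_def)
  also have "\<dots> \<le> 2 * K" using Kx by linarith
  finally have sq: "norm (xe - x0)^2 \<le> 4 * \<epsilon> * K" using eps by (simp add: divide_le_eq mult.commute mult.left_commute)
  have near: "norm (xe - x0) < 1/2"
  proof (rule ccontr)
    assume "\<not> ?thesis"
    hence "1/2 \<le> norm (xe - x0)" by simp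
    hence "(1/2)^2 \<le> norm (xe - x0)^2" by (rule power_mono) simp
    hence "1/4 \<le> norm (xe - x0)^2" by (simp add: power2_eq_square)
    thus False using sq eps by linarith
  qed
  define v where "v = (1 / \<epsilon>) *\<^sub>R (x0 - xe)"
  have key: "- F w \<ge> - F xe + v \<bullet> (w - xe) - norm (w - xe)^2 / (2 * \<epsilon>)" if w: "norm (w - xe) < 1/2" for w
  proof -
    have "norm (w - x0) \<le> norm (w - xe) + norm (xe - x0)" using norm_triangle_ineq[of "w - xe" "xe - x0"] by simp
    hence "w \<in> cball x0 1" using w near by (simp add: dist_norm norm_minus_commute)
    hence "q xe \<le> q w" by (rule xe(2))
    moreover have "norm (w - x0)^2 = norm (w - xe)^2 + 2 * ((w - xe) \<bullet> (xe - x0)) + norm (xe - x0)^2"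
      using sq_expand[of "w - xe" "xe - x0"] by simp
    ultimately have "- F w \<ge> - F xe - (norm (w - xe)^2 + 2 * ((w - xe) \<bullet> (xe - x0))) / (2 * \<epsilon>)"
      using eps by (simp add: q_def add_divide_distrib)
    moreover have "v \<bullet> (w - xe) = - (((w - xe) \<bullet> (xe - x0)) / \<epsilon>)"
    proof -
      have "v \<bullet> (w - xe) = (1 / \<epsilon>) * ((x0 - xe) \<bullet> (w - xe))" by (simp add: v_def)
      also have "\<dots> = (1 / \<epsilon>) * (- ((w - xe) \<bullet> (xe - x0)))"
        by (metis inner_commute inner_minus_left minus_diff_eq)
      also have "\<dots> = - (((w - xe) \<bullet> (xe - x0)) / \<epsilon>)" by simp
      finally show ?thesis .
    qed
    moreover have "(norm (w - xe)^2 + 2 * ((w - xe) \<bullet> (xe - x0))) / (2 * \<epsilon>)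
        = norm (w - xe)^2 / (2 * \<epsilon>) + ((w - xe) \<bullet> (xe - x0)) / \<epsilon>"
      using eps by (simp add: add_divide_distrib)
    ultimately show ?thesis by linarith
  qed
  have fr: "v \<in> frechet_subdiff (\<lambda>x. ereal (- F x)) xe"
    unfolding frechet_real
  proof (intro allI impI)
    fix e :: real assume e: "e > 0"
    show "\<exists>d>0. \<forall>y. norm (y - xe) < d \<longrightarrow> - F xe + v \<bullet> (y - xe) - e * norm (y - xe) \<le> - F y"
    proof (intro exI[of _ "min (1/2) (2 * \<epsilon> * e)"] conjI allI impI)
      show "0 < min (1/2) (2 * \<epsilon> * e)" using e eps by simp
      fix y assume y: "norm (y - xe) < min (1/2) (2 * \<epsilon> * e)"
      have "norm (y - xe)^2 / (2 * \<epsilon>) \<le> e * norm (y - xe)"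
      proof -
        have "norm (y - xe)^2 = norm (y - xe) * norm (y - xe)" by (simp add: power2_eq_square)
        also have "\<dots> \<le> norm (y - xe) * (2 * \<epsilon> * e)" using y by (intro mult_left_mono) auto
        finally show ?thesis using eps by (simp add: divide_le_eq mult.commute mult.left_commute)
      qed
      with key[of y] y show "- F xe + v \<bullet> (y - xe) - e * norm (y - xe) \<le> - F y" by simp
    qed
  qed
  have nv: "norm v \<le> 2 * K + 1"
  proof (cases "v = 0")
    case False
    define u where "u = (1 / norm v) *\<^sub>R v"
    have nu: "norm u = 1" using False by (simp add: u_def)
    have vu: "v \<bullet> u = norm v" using False by (simp add: u_def power2_norm_eq_inner[symmetric] power2_eq_square)
    have n1: "norm ((xe + \<epsilon> *\<^sub>R u) - xe) < 1/2" using nu eps by simp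
    have A: "F (xe + \<epsilon> *\<^sub>R u) \<le> F xe - \<epsilon> * norm v + \<epsilon> / 2"
    proof -
      have "- F (xe + \<epsilon> *\<^sub>R u) \<ge> - F xe + v \<bullet> (\<epsilon> *\<^sub>R u) - norm (\<epsilon> *\<^sub>R u)^2 / (2 * \<epsilon>)"
        using key[OF n1] by simp
      moreover have "norm (\<epsilon> *\<^sub>R u)^2 / (2 * \<epsilon>) = \<epsilon> / 2" using nu eps by (simp add: power2_eq_square)
      ultimately show ?thesis using vu by simp
    qed
    have B: "2 * F xe \<le> F (xe + \<epsilon> *\<^sub>R u) + F (xe - \<epsilon> *\<^sub>R u)" by (rule midpoint_cv[OF cv])
    have C: "F (xe + \<epsilon> *\<^sub>R (- u)) - F xe \<le> (\<epsilon> / 1) * (F (xe + 1 *\<^sub>R (- u)) - F xe)"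
      by (rule slope[OF cv]) (use eps in auto)
    have "norm (xe - u - x0) \<le> norm (xe - x0) + norm u" using norm_triangle_ineq4[of "xe - x0" u] by (simp add: algebra_simps)
    hence "xe - u \<in> cball x0 2" using near nu by (simp add: dist_norm norm_minus_commute)
    hence "\<bar>F (xe - u)\<bar> \<le> K" by (rule K)
    have C': "F (xe - \<epsilon> *\<^sub>R u) - F xe \<le> \<epsilon> * (F (xe - u) - F xe)" using C by simp
    have M: "\<epsilon> * (F (xe - u) - F xe) \<le> \<epsilon> * (2 * K)"
      using eps \<open>\<bar>F (xe - u)\<bar> \<le> K\<close> Kx by (intro mult_left_mono) auto
    have "\<epsilon> * norm v \<le> \<epsilon> * (2 * K) + \<epsilon> / 2" using A B C' M by linarith
    hence "\<epsilon> * norm v \<le> \<epsilon> * (2 * K + 1/2)" by (simp add: algebra_simps)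
    hence "norm v \<le> 2 * K + 1/2" using eps by (meson mult_left_le_imp_le)
    thus ?thesis by simp
  next
    case True thus ?thesis using Kx by simp
  qed
  show ?thesis using sq fr nv by blast
qed

lemma PX:
  fixes F :: "'a::euclidean_space \<Rightarrow> real"
  assumes cv: "convex_on UNIV F"
  shows "\<exists>l. l \<in> limiting_subdiff (\<lambda>x. ereal (- F x)) x0"
proof -
  have cF: "continuous_on UNIV F" by (rule convex_on_continuous[OF open_UNIV cv])
  have "compact (F ` cball x0 2)" by (intro compact_continuous_image continuous_on_subset[OF cF]) auto
  then obtain B where B: "\<forall>y\<in>F ` cball x0 2. norm y \<le> B" using compact_imp_bounded bounded_iff by metis
  define K where "K = max B 0"
  have K: "\<And>w. w \<in> cball x0 2 \<Longrightarrow> \<bar>F w\<bar> \<le> K" "K \<ge> 0" using B by (force simp: K_def)+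
  define eps where "eps n = 1 / (real n + 16 * K + 16)" for n :: nat
  have den: "real n + 16 * K + 16 \<ge> 16" for n using K(2) by simp
  have epsp: "0 < eps n" "eps n < 1/2" "4 * eps n * K < 1/4" for n
  proof -
    show "0 < eps n" using den[of n] by (simp add: eps_def)
    show "eps n < 1/2" using den[of n] by (simp add: eps_def divide_less_eq)
    have "4 * K < (real n + 16 * K + 16) / 4" using K(2) by simp
    hence "4 * K / (real n + 16 * K + 16) < 1/4" using den[of n] by (simp add: divide_less_eq)
    thus "4 * eps n * K < 1/4" by (simp add: eps_def)
  qed
  have "\<forall>n. \<exists>x v. norm (x - x0)^2 \<le> 4 * eps n * K \<and> v \<in> frechet_subdiff (\<lambda>x. ereal (- F x)) x
      \<and> norm v \<le> 2 * K + 1"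
    using PX1[OF cv K(1) epsp] by blast
  then obtain X V where XV: "\<And>n. norm (X n - x0)^2 \<le> 4 * eps n * K"
    "\<And>n. V n \<in> frechet_subdiff (\<lambda>x. ereal (- F x)) (X n)" "\<And>n. norm (V n) \<le> 2 * K + 1"
    by metis
  have e0: "eps \<longlonglongrightarrow> 0"
  proof (rule tendsto_sandwich[of "\<lambda>_. 0" _ _ "\<lambda>n. inverse (real (Suc n))"])
    show "\<forall>\<^sub>F n in sequentially. 0 \<le> eps n" using epsp(1) by (intro always_eventually allI less_imp_le)
    show "\<forall>\<^sub>F n in sequentially. eps n \<le> inverse (real (Suc n))"
      using den K(2) by (auto simp: eps_def intro!: always_eventually divide_left_mono simp: field_simps)
  qed (auto simp del: of_nat_Suc intro: LIMSEQ_inverse_real_of_nat)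
  have X: "X \<longlonglongrightarrow> x0"
  proof -
    have s0: "(\<lambda>n. sqrt (4 * eps n * K)) \<longlonglongrightarrow> 0"
      using tendsto_real_sqrt[OF tendsto_mult[OF tendsto_mult[OF tendsto_const e0] tendsto_const]] by simp
    have "(\<lambda>n. norm (X n - x0)) \<longlonglongrightarrow> 0"
    proof (rule tendsto_sandwich[of "\<lambda>_. 0" _ _ "\<lambda>n. sqrt (4 * eps n * K)"])
      show "\<forall>\<^sub>F n in sequentially. norm (X n - x0) \<le> sqrt (4 * eps n * K)"
        using XV(1) by (intro always_eventually allI real_le_rsqrt)
    qed (use s0 in auto)
    thus ?thesis by (simp add: tendsto_norm_zero_iff LIM_zero_iff)
  qed
  have bV: "bounded (range V)" using XV(3) by (auto simp: bounded_iff)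
  obtain l r where lr: "strict_mono r" "(V \<circ> r) \<longlonglongrightarrow> l"
    using bounded_imp_convergent_subsequence[OF bV] by blast
  have Xr: "(X \<circ> r) \<longlonglongrightarrow> x0" by (rule LIMSEQ_subseq_LIMSEQ[OF X lr(1)])
  have "(\<lambda>k. F ((X \<circ> r) k)) \<longlonglongrightarrow> F x0"
    by (rule continuous_on_tendsto_compose[OF cF Xr]) auto
  hence Fr: "(\<lambda>k. ereal (- F ((X \<circ> r) k))) \<longlonglongrightarrow> ereal (- F x0)"
    by (simp add: tendsto_minus)
  show ?thesis unfolding limiting_subdiff_def
  proof (rule exI[of _ l], rule CollectI, rule exI[of _ "X \<circ> r"], rule exI[of _ "V \<circ> r"])
  qed (use Xr Fr lr(2) XV(2) in auto)
qed

lemma CWC: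
  fixes F \<phi> :: "'a::euclidean_space \<Rightarrow> real"
  assumes cv: "convex_on UNIV F" and pcv: "convex_on UNIV \<phi>"
    and pd: "\<And>x. (\<phi> has_derivative (\<lambda>h. D\<phi> x \<bullet> h)) (at x)" and inv: "\<And>v. D\<phi> (D\<phi>s v) = v"
  shows "a_weakly_convex \<phi> D\<phi>s (\<lambda>x. ereal (F x))"
  unfolding a_weakly_convex_def
proof (intro conjI allI impI)
  show "proper_fun (\<lambda>x. ereal (F x))" by (simp add: proper_fun_def)
  show "lsc_fun (\<lambda>x. ereal (F x))" by (rule lsc_cont[OF convex_on_continuous[OF open_UNIV cv]])
  fix xb vb w assume "vb \<in> limiting_subdiff (\<lambda>x. ereal (F x)) xb"
  then obtain xs vs where xs: "xs \<longlonglongrightarrow> xb" "(\<lambda>k. ereal (F (xs k))) \<longlonglongrightarrow> ereal (F xb)"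
    "\<And>k. vs k \<in> frechet_subdiff (\<lambda>x. ereal (F x)) (xs k)" "vs \<longlonglongrightarrow> vb"
    unfolding limiting_subdiff_def by blast
  have sg: "F (xs k) + vs k \<bullet> (w - xs k) \<le> F w" for k
    by (rule FSG[OF cv]) (use xs(3)[of k] in \<open>auto simp: frechet_real\<close>)
  have Fl: "(\<lambda>k. F (xs k)) \<longlonglongrightarrow> F xb" using xs(2) by simp
  have "(\<lambda>k. F (xs k) + vs k \<bullet> (w - xs k)) \<longlonglongrightarrow> F xb + vb \<bullet> (w - xb)"
    by (intro tendsto_intros Fl xs(1) xs(4))
  hence sgb: "F xb + vb \<bullet> (w - xb) \<le> F w" using sg by (intro LIMSEQ_le_const2) auto
  define z where "z = D\<phi>s (- vb)"
  have "\<phi> z + D\<phi> z \<bullet> ((w - xb + z) - z) \<le> \<phi> (w - xb + z)" by (rule grad_ineq[OF pcv pd])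
  hence "\<phi> z - vb \<bullet> (w - xb) \<le> \<phi> (w - xb + z)" by (simp add: z_def inv)
  with sgb show "ereal (F xb) - ereal (\<phi> (w - xb + D\<phi>s (- vb))) + ereal (\<phi> (D\<phi>s (- vb))) \<le> ereal (F w)"
    by (simp add: z_def)
qed


lemma ATT:
  fixes g :: "'a::euclidean_space \<Rightarrow> ereal" and \<phi> \<phi>s :: "'a \<Rightarrow> real"
  assumes gp: "proper_fun g" and gl: "lsc_fun g" and cd: "\<And>y. ereal (c \<bullet> y + d) \<le> g y"
    and FY: "\<And>z v. v \<bullet> z - \<phi> z \<le> \<phi>s v" and coer: "super_coercive \<phi>" and pc: "continuous_on UNIV \<phi>"
  shows "\<exists>y. infconv g \<phi> x = g y + ereal (\<phi> (x - y))"
proof -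
  obtain y0 where y0: "g y0 \<noteq> \<infinity>" using gp by (auto simp: proper_fun_def)
  moreover have "g y0 \<noteq> -\<infinity>" using gp by (auto simp: proper_fun_def)
  ultimately obtain b0 where b0: "g y0 = ereal b0" by (cases "g y0") auto
  define b where "b = b0 + \<phi> (x - y0)"
  define m where "m = infconv g \<phi> x"
  have low: "ereal (c \<bullet> x + d - \<phi>s c) \<le> g y + ereal (\<phi> (x - y))" for y
  proof -
    have "c \<bullet> (x - y) - \<phi> (x - y) \<le> \<phi>s c" by (rule FY)
    hence "c \<bullet> x + d - \<phi>s c \<le> (c \<bullet> y + d) + \<phi> (x - y)" by (simp add: inner_diff_right)
    hence "ereal (c \<bullet> x + d - \<phi>s c) \<le> ereal (c \<bullet> y + d) + ereal (\<phi> (x - y))" by simp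
    also have "\<dots> \<le> g y + ereal (\<phi> (x - y))" using cd[of y] by (intro add_right_mono)
    finally show ?thesis .
  qed
  have mub: "m \<le> ereal b" unfolding m_def infconv_def b_def
    using INF_lower[of y0 UNIV "\<lambda>y. g y + ereal (\<phi> (x - y))"] b0 by simp
  have mlb: "ereal (c \<bullet> x + d - \<phi>s c) \<le> m" unfolding m_def infconv_def by (rule INF_greatest) (rule low)
  obtain mr where mr: "m = ereal mr" using mub mlb by (cases m) auto
  have mrb: "mr \<le> b" using mub mr by simp
  have "eventually (\<lambda>z. norm c + 1 \<le> \<phi> z / norm z) at_infinity"
    using coer unfolding super_coercive_def filterlim_at_top by blast
  then obtain R0 where R0: "\<And>z. R0 \<le> norm z \<Longrightarrow> norm c + 1 \<le> \<phi> z / norm z"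
    unfolding eventually_at_infinity by blast
  define Rb where "Rb = max (max R0 1) (b + 1 - c \<bullet> x - d)"
  have bound: "norm (x - y) \<le> Rb" if y: "g y + ereal (\<phi> (x - y)) \<le> ereal (b + 1)" for y
  proof (rule ccontr)
    assume "\<not> ?thesis"
    hence n: "norm (x - y) > Rb" by simp
    hence n1: "norm (x - y) > 0" "R0 \<le> norm (x - y)" "norm (x - y) > b + 1 - c \<bullet> x - d"
      by (auto simp: Rb_def)
    have "norm c + 1 \<le> \<phi> (x - y) / norm (x - y)" using R0 n1(2) by blast
    hence ph: "(norm c + 1) * norm (x - y) \<le> \<phi> (x - y)" using n1(1) by (simp add: le_divide_eq)
    have "ereal (c \<bullet> y + d) + ereal (\<phi> (x - y)) \<le> ereal (b + 1)"
      using cd[of y] y by (meson add_right_mono order.trans)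
    hence A: "c \<bullet> y + d + \<phi> (x - y) \<le> b + 1" by simp
    have "c \<bullet> (x - y) \<le> norm c * norm (x - y)" by (rule Cauchy_Schwarz_ineq2[THEN order_trans[OF abs_ge_self]])
    hence "c \<bullet> x - norm c * norm (x - y) \<le> c \<bullet> y" by (simp add: inner_diff_right)
    with A ph have "c \<bullet> x + d + norm (x - y) \<le> b + 1" by (simp add: algebra_simps)
    with n1(3) show False by simp
  qed
  have "\<forall>n. \<exists>y. g y + ereal (\<phi> (x - y)) < ereal (mr + 1 / (real n + 1))"
  proof
    fix n :: nat
    have "m < ereal (mr + 1 / (real n + 1))" using mr by simp
    thus "\<exists>y. g y + ereal (\<phi> (x - y)) < ereal (mr + 1 / (real n + 1))"
      unfolding m_def infconv_def by (simp add: INF_less_iff)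
  qed
  then obtain Y where Y: "\<And>n. g (Y n) + ereal (\<phi> (x - Y n)) < ereal (mr + 1 / (real n + 1))" by metis
  have Yb: "norm (x - Y n) \<le> Rb" for n
  proof (rule bound)
    have "1 / (real n + 1) \<le> 1" by simp
    hence "mr + 1 / (real n + 1) \<le> b + 1" using mrb by linarith
    hence "ereal (mr + 1 / (real n + 1)) \<le> ereal (b + 1)" by simp
    thus "g (Y n) + ereal (\<phi> (x - Y n)) \<le> ereal (b + 1)" using Y[of n] by (meson less_imp_le order.trans)
  qed
  have "bounded (range Y)" unfolding bounded_iff
  proof (intro exI[of _ "norm x + Rb"] ballI)
    fix z assume "z \<in> range Y" then obtain n where z: "z = Y n" by blast
    have "norm (Y n) \<le> norm x + norm (x - Y n)" using norm_triangle_ineq4[of x "x - Y n"] by simp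
    thus "norm z \<le> norm x + Rb" using Yb[of n] z by simp
  qed
  then obtain ys r where r: "strict_mono r" "(Y \<circ> r) \<longlonglongrightarrow> ys"
    using bounded_imp_convergent_subsequence by blast
  have phl: "(\<lambda>n. \<phi> (x - (Y \<circ> r) n)) \<longlonglongrightarrow> \<phi> (x - ys)"
  proof (rule continuous_on_tendsto_compose[OF pc])
    show "(\<lambda>n. x - (Y \<circ> r) n) \<longlonglongrightarrow> x - ys" by (intro tendsto_intros r(2))
  qed auto
  have le: "g ys \<le> ereal (mr - \<phi> (x - ys) + e)" if e: "e > 0" for e
  proof (rule lsc_seq[OF gl r(2)])
    have ev1: "eventually (\<lambda>n. \<phi> (x - (Y \<circ> r) n) > \<phi> (x - ys) - e/2) sequentially"
    proof -
      have "eventually (\<lambda>n. dist (\<phi> (x - (Y \<circ> r) n)) (\<phi> (x - ys)) < e/2) sequentially"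
        using tendstoD[OF phl, of "e/2"] e by simp
      thus ?thesis
      proof (rule eventually_mono)
        fix n assume "dist (\<phi> (x - (Y \<circ> r) n)) (\<phi> (x - ys)) < e/2"
        thus "\<phi> (x - (Y \<circ> r) n) > \<phi> (x - ys) - e/2" unfolding dist_real_def abs_less_iff by linarith
      qed
    qed
    have "eventually (\<lambda>n. inverse (real (Suc n)) < e/2) sequentially"
      using tendstoD[OF LIMSEQ_inverse_real_of_nat, of "e/2"] e by (auto elim: eventually_mono simp del: of_nat_Suc)
    hence ev2: "eventually (\<lambda>n. 1 / (real (r n) + 1) < e/2) sequentially"
    proof (rule eventually_mono)
      fix n assume a: "inverse (real (Suc n)) < e/2"
      have "n \<le> r n" by (rule seq_suble[OF r(1)])
      hence "1 / (real (r n) + 1) \<le> 1 / (real n + 1)" by (intro divide_left_mono) auto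
      thus "1 / (real (r n) + 1) < e/2" using a by (simp add: inverse_eq_divide add.commute)
    qed
    show "eventually (\<lambda>n. g ((Y \<circ> r) n) \<le> ereal (mr - \<phi> (x - ys) + e)) sequentially"
      using ev1 ev2
    proof eventually_elim
      case (elim n)
      have a: "g (Y (r n)) + ereal (\<phi> (x - Y (r n))) < ereal (mr + 1 / (real (r n) + 1))" by (rule Y)
      have "g (Y (r n)) < ereal (mr + 1 / (real (r n) + 1) - \<phi> (x - Y (r n)))"
        using a by (cases "g (Y (r n))") auto
      also have "\<dots> \<le> ereal (mr - \<phi> (x - ys) + e)" using elim by simp
      finally show ?case by simp
    qed
  qed
  have "g ys + ereal (\<phi> (x - ys)) \<le> m"
  proof -
    have "g ys + ereal (\<phi> (x - ys)) \<le> ereal mr + ereal e" if "e > 0" for e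
    proof -
      have "g ys + ereal (\<phi> (x - ys)) \<le> ereal (mr - \<phi> (x - ys) + e) + ereal (\<phi> (x - ys))"
        using le[OF that] by (intro add_right_mono)
      thus ?thesis by simp
    qed
    hence "g ys + ereal (\<phi> (x - ys)) \<le> ereal mr" by (rule ereal_le_epsilon2[rule_format]) 
    thus ?thesis using mr by simp
  qed
  moreover have "m \<le> g ys + ereal (\<phi> (x - ys))" unfolding m_def infconv_def by (rule INF_lower) simp
  ultimately show ?thesis unfolding m_def by (intro exI[of _ ys]) simp
qed

lemma lsc_minus_cont:
  fixes F :: "'a::metric_space \<Rightarrow> ereal"
  assumes lF: "lsc_fun F" and c\<psi>: "continuous_on UNIV \<psi>"
  shows "lsc_fun (\<lambda>x. F x - ereal (\<psi> x))"
  unfolding lsc_iff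
proof (intro allI impI)
  fix x c assume a: "ereal c < F x - ereal (\<psi> x)"
  hence "ereal (c + \<psi> x) < F x" by (cases "F x") auto
  then obtain c2 where c2: "ereal (c + \<psi> x) < ereal c2" "ereal c2 < F x" using ereal_dense2 by blast
  obtain e1 where e1: "e1 > 0" "\<forall>y. dist y x < e1 \<longrightarrow> ereal c2 < F y" using lF c2(2) unfolding lsc_iff by blast
  have \<delta>: "c2 - c - \<psi> x > 0" using c2(1) by simp
  obtain e2 where e2: "e2 > 0" "\<forall>y. dist y x < e2 \<longrightarrow> dist (\<psi> y) (\<psi> x) < c2 - c - \<psi> x"
    using c\<psi> \<delta> unfolding continuous_on_iff by (metis UNIV_I)
  show "\<exists>e>0. \<forall>y. dist y x < e \<longrightarrow> ereal c < F y - ereal (\<psi> y)"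
  proof (intro exI[of _ "min e1 e2"] conjI allI impI)
    show "0 < min e1 e2" using e1 e2 by simp
    fix y assume y: "dist y x < min e1 e2"
    have Fy: "ereal c2 < F y" using e1 y by simp
    have "dist (\<psi> y) (\<psi> x) < c2 - c - \<psi> x" using e2 y by simp
    hence "\<psi> y < c2 - c" unfolding dist_real_def abs_less_iff by linarith
    thus "ereal c < F y - ereal (\<psi> y)" using Fy by (cases "F y") auto
  qed
qed

lemma SHIFT:
  assumes "ereal (\<phi>s v) = fconj (\<lambda>x. ereal (\<phi> x)) v"
  shows "(SUP x. ereal (v \<bullet> x - \<phi> (x - y))) = ereal (\<phi>s v + v \<bullet> y)"
proof -
  have 1: "(SUP x. ereal (v \<bullet> x - \<phi> (x - y))) = (SUP z. ereal (v \<bullet> z - \<phi> z) + ereal (v \<bullet> y))"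
  proof (rule antisym)
    show "(SUP x. ereal (v \<bullet> x - \<phi> (x - y))) \<le> (SUP z. ereal (v \<bullet> z - \<phi> z) + ereal (v \<bullet> y))"
    proof (rule SUP_least)
      fix x
      have "ereal (v \<bullet> x - \<phi> (x - y)) = ereal (v \<bullet> (x - y) - \<phi> (x - y)) + ereal (v \<bullet> y)"
        by (simp add: inner_diff_right)
      also have "\<dots> \<le> (SUP z. ereal (v \<bullet> z - \<phi> z) + ereal (v \<bullet> y))" by (rule SUP_upper) simp
      finally show "ereal (v \<bullet> x - \<phi> (x - y)) \<le> (SUP z. ereal (v \<bullet> z - \<phi> z) + ereal (v \<bullet> y))" .
    qed
    show "(SUP z. ereal (v \<bullet> z - \<phi> z) + ereal (v \<bullet> y)) \<le> (SUP x. ereal (v \<bullet> x - \<phi> (x - y)))"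
    proof (rule SUP_least)
      fix z
      have "ereal (v \<bullet> z - \<phi> z) + ereal (v \<bullet> y) = ereal (v \<bullet> (z + y) - \<phi> ((z + y) - y))"
        by (simp add: inner_add_right)
      also have "\<dots> \<le> (SUP x. ereal (v \<bullet> x - \<phi> (x - y)))" by (rule SUP_upper) simp
      finally show "ereal (v \<bullet> z - \<phi> z) + ereal (v \<bullet> y) \<le> (SUP x. ereal (v \<bullet> x - \<phi> (x - y)))" .
    qed
  qed
  have 2: "(SUP z. ereal (v \<bullet> z - \<phi> z) + ereal (v \<bullet> y)) = (SUP z. ereal (v \<bullet> z - \<phi> z)) + ereal (v \<bullet> y)"
    by (rule SUP_ereal_add_left) auto
  have 3: "(SUP z. ereal (v \<bullet> z - \<phi> z)) = ereal (\<phi>s v)" using assms by (simp add: fconj_def)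
  show ?thesis using 1 2 3 by simp
qed

lemma SUP_minus_const:
  fixes A :: "'i \<Rightarrow> real" and \<beta> :: ereal
  assumes "\<bar>(SUP x. ereal (A x))\<bar> \<noteq> \<infinity>"
  shows "(SUP x. ereal (A x) - \<beta>) = (SUP x. ereal (A x)) - \<beta>"
proof (cases "\<beta> = \<infinity>")
  case True
  thus ?thesis using assms by (cases "SUP x. ereal (A x)") auto
next
  case False
  thus ?thesis by (rule SUP_ereal_minus_left[OF UNIV_not_empty])
qed

lemma CONJ_INF:
  fixes g :: "'a::real_inner \<Rightarrow> ereal"
  assumes gm: "\<And>y. g y \<noteq> -\<infinity>" and pc: "\<And>v. ereal (\<phi>s v) = fconj (\<lambda>x. ereal (\<phi> x)) v"
  shows "fconj (infconv g \<phi>) v = fconj g v + ereal (\<phi>s v)"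
proof -
  have sh: "\<And>y. (SUP x. ereal (v \<bullet> x - \<phi> (x - y))) = ereal (\<phi>s v + v \<bullet> y)"
    by (rule SHIFT) (rule pc)
  have "fconj (infconv g \<phi>) v = (SUP x. ereal (v \<bullet> x) - (INF y. g y + ereal (\<phi> (x - y))))"
    by (simp add: fconj_def infconv_def)
  also have "\<dots> = (SUP x. SUP y. ereal (v \<bullet> x) - (g y + ereal (\<phi> (x - y))))"
    by (subst SUP_ereal_minus_right) auto
  also have "\<dots> = (SUP y. SUP x. ereal (v \<bullet> x) - (g y + ereal (\<phi> (x - y))))" by (rule SUP_commute)
  also have "\<dots> = (SUP y. ereal (\<phi>s v + v \<bullet> y) - g y)"
  proof (rule SUP_cong[OF refl])
    fix y
    have "(SUP x. ereal (v \<bullet> x) - (g y + ereal (\<phi> (x - y)))) = (SUP x. ereal (v \<bullet> x - \<phi> (x - y)) - g y)"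
      using gm[of y] by (intro SUP_cong refl) (cases "g y"; simp)
    also have "\<dots> = (SUP x. ereal (v \<bullet> x - \<phi> (x - y))) - g y"
      by (rule SUP_minus_const) (simp add: sh)
    also have "\<dots> = ereal (\<phi>s v + v \<bullet> y) - g y" by (simp add: sh)
    finally show "(SUP x. ereal (v \<bullet> x) - (g y + ereal (\<phi> (x - y)))) = ereal (\<phi>s v + v \<bullet> y) - g y" .
  qed
  also have "\<dots> = (SUP y. ereal (\<phi>s v) + (ereal (v \<bullet> y) - g y))"
    using gm by (intro SUP_cong refl) (case_tac "g x"; simp)
  also have "\<dots> = ereal (\<phi>s v) + (SUP y. ereal (v \<bullet> y) - g y)"
    by (rule SUP_ereal_add_right) auto
  also have "\<dots> = fconj g v + ereal (\<phi>s v)" by (simp add: fconj_def add.commute)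
  finally show ?thesis .
qed

lemma infconv_convex:
  fixes g :: "'a::real_vector \<Rightarrow> ereal"
  assumes gc: "ereal_convex g" and gm: "\<And>y. g y \<noteq> -\<infinity>" and pcv: "convex_on UNIV \<phi>"
    and fin: "\<And>x. \<bar>infconv g \<phi> x\<bar> \<noteq> \<infinity>"
  shows "ereal_convex (infconv g \<phi>)"
  unfolding ereal_convex_def
proof (intro allI impI)
  fix x x' :: 'a and t :: real assume t: "0 < t \<and> t < 1"
  let ?k = "infconv g \<phi>"
  obtain a where a: "?k x = ereal a" using fin[of x] by (cases "?k x") auto
  obtain a' where a': "?k x' = ereal a'" using fin[of x'] by (cases "?k x'") auto
  have H: "?k (t *\<^sub>R x + (1 - t) *\<^sub>R x') \<le> ereal (t * a + (1 - t) * a' + e)" if e: "e > 0" for e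
  proof -
    have "?k x < ereal (a + e)" using a e by simp
    then obtain y where y: "g y + ereal (\<phi> (x - y)) < ereal (a + e)"
      unfolding infconv_def by (auto simp: INF_less_iff)
    have "?k x' < ereal (a' + e)" using a' e by simp
    then obtain y' where y': "g y' + ereal (\<phi> (x' - y')) < ereal (a' + e)"
      unfolding infconv_def by (auto simp: INF_less_iff)
    obtain b where b: "g y = ereal b" using y gm[of y] by (cases "g y") auto
    obtain b' where b': "g y' = ereal b'" using y' gm[of y'] by (cases "g y'") auto
    have gy: "g (t *\<^sub>R y + (1 - t) *\<^sub>R y') \<le> ereal (t * b + (1 - t) * b')"
      using gc t b b' unfolding ereal_convex_def by (metis times_ereal.simps(1) plus_ereal.simps(1))
    have "\<phi> ((1 - t) *\<^sub>R (x' - y') + t *\<^sub>R (x - y)) \<le> (1 - t) * \<phi> (x' - y') + t * \<phi> (x - y)"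
      using convex_onD[OF pcv, of t "x' - y'" "x - y"] t by simp
    moreover have "(1 - t) *\<^sub>R (x' - y') + t *\<^sub>R (x - y) = (t *\<^sub>R x + (1 - t) *\<^sub>R x') - (t *\<^sub>R y + (1 - t) *\<^sub>R y')"
      by (simp add: algebra_simps)
    ultimately have ph: "\<phi> ((t *\<^sub>R x + (1 - t) *\<^sub>R x') - (t *\<^sub>R y + (1 - t) *\<^sub>R y')) \<le> (1 - t) * \<phi> (x' - y') + t * \<phi> (x - y)"
      by simp
    have "?k (t *\<^sub>R x + (1 - t) *\<^sub>R x') \<le> g (t *\<^sub>R y + (1 - t) *\<^sub>R y') + ereal (\<phi> ((t *\<^sub>R x + (1 - t) *\<^sub>R x') - (t *\<^sub>R y + (1 - t) *\<^sub>R y')))"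
      unfolding infconv_def by (rule INF_lower) simp
    also have "\<dots> \<le> ereal (t * b + (1 - t) * b') + ereal ((1 - t) * \<phi> (x' - y') + t * \<phi> (x - y))"
      using gy ph by (intro add_mono) auto
    also have "\<dots> \<le> ereal (t * a + (1 - t) * a' + e)"
    proof -
      have yb: "b + \<phi> (x - y) < a + e" using y b by simp
      have yb': "b' + \<phi> (x' - y') < a' + e" using y' b' by simp
      have "t * (b + \<phi> (x - y)) \<le> t * (a + e)" using yb t by (intro mult_left_mono) auto
      moreover have "(1 - t) * (b' + \<phi> (x' - y')) \<le> (1 - t) * (a' + e)" using yb' t by (intro mult_left_mono) auto
      ultimately have "t * b + (1 - t) * b' + ((1 - t) * \<phi> (x' - y') + t * \<phi> (x - y)) \<le> t * a + (1 - t) * a' + e"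
        by (simp add: algebra_simps)
      thus ?thesis by simp
    qed
    finally show ?thesis .
  qed
  have "?k (t *\<^sub>R x + (1 - t) *\<^sub>R x') \<le> ereal (t * a + (1 - t) * a')"
  proof (rule ereal_le_epsilon2)
    fix e :: real assume "0 < e"
    from H[OF this] show "?k (t *\<^sub>R x + (1 - t) *\<^sub>R x') \<le> ereal (t * a + (1 - t) * a') + ereal e" by simp
  qed
  thus "?k (t *\<^sub>R x + (1 - t) *\<^sub>R x') \<le> ereal t * ?k x + ereal (1 - t) * ?k x'" using a a' by simp
qed

lemma FY:
  assumes pc: "\<And>v. ereal (\<phi>s v) = fconj (\<lambda>x. ereal (\<phi> x)) v"
  shows "v \<bullet> z - \<phi> z \<le> \<phi>s v"
proof -
  have "ereal (v \<bullet> z) - ereal (\<phi> z) \<le> fconj (\<lambda>x. ereal (\<phi> x)) v" by (rule fconj_ge)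
  thus ?thesis using pc[of v, symmetric] by simp
qed

lemma MAJ:
  fixes F \<phi> :: "'a::euclidean_space \<Rightarrow> real"
  assumes cv: "convex_on UNIV F" and aw: "a_weakly_convex \<phi> D\<phi>s (\<lambda>x. ereal (- F x))"
  shows "\<exists>z. \<forall>w. F w \<le> F x0 + \<phi> (w - x0 + z) - \<phi> z"
proof -
  obtain l where l: "l \<in> limiting_subdiff (\<lambda>x. ereal (- F x)) x0" using PX[OF cv] by blast
  have "\<forall>w. ereal (- F w) \<ge> ereal (- F x0) - ereal (\<phi> (w - x0 + D\<phi>s (- l))) + ereal (\<phi> (D\<phi>s (- l)))"
    using aw l unfolding a_weakly_convex_def by blast
  hence h: "\<forall>w. - F x0 - \<phi> (w - x0 + D\<phi>s (- l)) + \<phi> (D\<phi>s (- l)) \<le> - F w" by simp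
  have "F w \<le> F x0 + \<phi> (w - x0 + D\<phi>s (- l)) - \<phi> (D\<phi>s (- l))" for w using h[rule_format, of w] by linarith
  thus ?thesis by blast
qed

lemma V_I:
  fixes \<phi> :: "'a::euclidean_space \<Rightarrow> real" and f :: "'a \<Rightarrow> ereal"
  assumes pcv: "convex_on UNIV \<phi>" and pd: "\<And>x. (\<phi> has_derivative (\<lambda>h. D\<phi> x \<bullet> h)) (at x)"
    and inv: "\<And>v. D\<phi> (D\<phi>s v) = v"
    and fp: "proper_fun f" and fc: "ereal_convex f" and aw: "a_weakly_convex \<phi> D\<phi>s (\<lambda>x. - f x)"
  shows "a_smooth \<phi> D\<phi>s f"
proof -
  have fin: "\<bar>f x\<bar> \<noteq> \<infinity>" for x
    using aw fp unfolding a_weakly_convex_def proper_fun_def by (cases "f x") auto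
  define F where "F x = real_of_ereal (f x)" for x
  have fF: "f = (\<lambda>x. ereal (F x))" using fin by (simp add: fun_eq_iff F_def ereal_real)
  have cv: "convex_on UNIV F" unfolding F_def by (rule convex_real[OF fin fc])
  have aw': "a_weakly_convex \<phi> D\<phi>s (\<lambda>x. ereal (- F x))" using aw by (simp add: fF)
  have "\<exists>D. (F has_derivative (\<lambda>h. D \<bullet> h)) (at x)" for x
  proof -
    obtain z where z: "\<And>w. F w \<le> F x + \<phi> (w - x + z) - \<phi> z" using MAJ[OF cv aw'] by blast
    have i: "((\<lambda>w. w - x + z) has_derivative (\<lambda>h. h)) (at x)" by (auto intro!: derivative_eq_intros)
    have p: "(\<phi> has_derivative (\<lambda>h. D\<phi> z \<bullet> h)) (at (x - x + z))" using pd[of z] by simp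
    have "((\<lambda>w. \<phi> (w - x + z)) has_derivative (\<lambda>h. D\<phi> z \<bullet> h)) (at x)"
      using has_derivative_compose[OF i p] by simp
    hence "((\<lambda>w. F x + \<phi> (w - x + z) - \<phi> z) has_derivative (\<lambda>h. 0 + D\<phi> z \<bullet> h - 0)) (at x)"
      by (intro has_derivative_diff has_derivative_add has_derivative_const)
    hence "((\<lambda>w. F x + \<phi> (w - x + z) - \<phi> z) has_derivative (\<lambda>h. D\<phi> z \<bullet> h)) (at x)" by simp
    from SW[OF cv this] z show ?thesis by auto
  qed
  then obtain G where G: "\<And>x. (F has_derivative (\<lambda>h. G x \<bullet> h)) (at x)" by metis
  have cG: "continuous_on UNIV G" by (rule GC[OF cv G])
  have awf: "a_weakly_convex \<phi> D\<phi>s f" unfolding fF by (rule CWC[OF cv pcv pd inv])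
  show ?thesis unfolding a_smooth_def
    using fin G cG awf aw by (auto simp: F_def[symmetric] intro!: exI[of _ G])
qed

lemma V_II:
  fixes \<phi> :: "'a::euclidean_space \<Rightarrow> real" and f :: "'a \<Rightarrow> ereal"
  assumes fp: "proper_fun f" and fc: "ereal_convex f" and aw: "a_weakly_convex \<phi> D\<phi>s (\<lambda>x. - f x)"
  shows "left_Phi_convex \<phi> (\<lambda>x. - f x)"
proof -
  have fin: "\<bar>f x\<bar> \<noteq> \<infinity>" for x
    using aw fp unfolding a_weakly_convex_def proper_fun_def by (cases "f x") auto
  define F where "F x = real_of_ereal (f x)" for x
  have fF: "f = (\<lambda>x. ereal (F x))" using fin by (simp add: fun_eq_iff F_def ereal_real)
  have cv: "convex_on UNIV F" unfolding F_def by (rule convex_real[OF fin fc])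
  have aw': "a_weakly_convex \<phi> D\<phi>s (\<lambda>x. ereal (- F x))" using aw by (simp add: fF)
  have "\<forall>x0. \<exists>z. \<forall>w. F w \<le> F x0 + \<phi> (w - x0 + z) - \<phi> z" using MAJ[OF cv aw'] by blast
  then obtain Z where Z: "\<And>x0 w. F w \<le> F x0 + \<phi> (w - x0 + Z x0) - \<phi> (Z x0)" by metis
  define S where "S = (\<lambda>x0. (x0 - Z x0, ereal (F x0 - \<phi> (Z x0)))) ` UNIV"
  have "- f x = (SUP p\<in>S. ereal (- \<phi> (x - fst p)) - snd p)" for x
  proof -
    have "(SUP p\<in>S. ereal (- \<phi> (x - fst p)) - snd p) = (SUP x0. ereal (- \<phi> (x - x0 + Z x0) - F x0 + \<phi> (Z x0)))"
      unfolding S_def by (simp add: image_comp o_def algebra_simps)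
    also have "\<dots> = ereal (- F x)"
    proof (rule antisym)
      show "(SUP x0. ereal (- \<phi> (x - x0 + Z x0) - F x0 + \<phi> (Z x0))) \<le> ereal (- F x)"
      proof (rule SUP_least)
        fix x0
        have "F x \<le> F x0 + \<phi> (x - x0 + Z x0) - \<phi> (Z x0)" by (rule Z)
        hence "- \<phi> (x - x0 + Z x0) - F x0 + \<phi> (Z x0) \<le> - F x" by linarith
        thus "ereal (- \<phi> (x - x0 + Z x0) - F x0 + \<phi> (Z x0)) \<le> ereal (- F x)" by simp
      qed
      have "ereal (- F x) = ereal (- \<phi> (x - x + Z x) - F x + \<phi> (Z x))" by simp
      also have "\<dots> \<le> (SUP x0. ereal (- \<phi> (x - x0 + Z x0) - F x0 + \<phi> (Z x0)))" by (rule SUP_upper) simp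
      finally show "ereal (- F x) \<le> (SUP x0. ereal (- \<phi> (x - x0 + Z x0) - F x0 + \<phi> (Z x0)))" .
    qed
    finally show ?thesis by (simp add: fF)
  qed
  thus ?thesis unfolding left_Phi_convex_def by blast
qed

lemma II_III:
  fixes \<phi> \<phi>s :: "'a::euclidean_space \<Rightarrow> real" and f :: "'a \<Rightarrow> ereal"
  assumes pc: "\<And>v. ereal (\<phi>s v) = fconj (\<lambda>x. ereal (\<phi> x)) v" and fp: "proper_fun f"
    and rep: "\<And>x. - f x = (SUP p\<in>S. ereal (- \<phi> (x - fst p)) - snd p)"
  shows "ereal_convex (\<lambda>v. fconj f v - ereal (\<phi>s v))"
proof -
  have Sne: "S \<noteq> {}"
  proof
    assume "S = {}"
    hence "f x = \<infinity>" for x using rep[of x] by (simp add: ereal_uminus_eq_reorder bot_ereal_def)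
    thus False using fp by (auto simp: proper_fun_def)
  qed
  have eq: "fconj f v - ereal (\<phi>s v) = (SUP p\<in>S. ereal (v \<bullet> fst p) - snd p)" for v
  proof -
    have "fconj f v = (SUP x. ereal (v \<bullet> x) + (SUP p\<in>S. ereal (- \<phi> (x - fst p)) - snd p))"
      unfolding fconj_def by (intro SUP_cong refl) (metis minus_ereal_def rep)
    also have "\<dots> = (SUP x. SUP p\<in>S. ereal (v \<bullet> x) + (ereal (- \<phi> (x - fst p)) - snd p))"
      by (intro SUP_cong refl SUP_ereal_add_right[symmetric] Sne) simp
    also have "\<dots> = (SUP p\<in>S. SUP x. ereal (v \<bullet> x) + (ereal (- \<phi> (x - fst p)) - snd p))"
      by (rule SUP_commute)
    also have "\<dots> = (SUP p\<in>S. ereal (\<phi>s v) + (ereal (v \<bullet> fst p) - snd p))"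
    proof (rule SUP_cong[OF refl])
      fix p :: "'a \<times> ereal"
      have sh: "(SUP x. ereal (v \<bullet> x - \<phi> (x - fst p))) = ereal (\<phi>s v + v \<bullet> fst p)"
        by (rule SHIFT) (rule pc)
      have "(SUP x. ereal (v \<bullet> x) + (ereal (- \<phi> (x - fst p)) - snd p))
          = (SUP x. ereal (v \<bullet> x - \<phi> (x - fst p)) - snd p)"
        by (intro SUP_cong refl) (cases "snd p"; simp)
      also have "\<dots> = (SUP x. ereal (v \<bullet> x - \<phi> (x - fst p))) - snd p"
        by (rule SUP_minus_const) (simp add: sh)
      also have "\<dots> = ereal (\<phi>s v) + (ereal (v \<bullet> fst p) - snd p)"
        by (simp add: sh) (cases "snd p"; simp)
      finally show "(SUP x. ereal (v \<bullet> x) + (ereal (- \<phi> (x - fst p)) - snd p))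
          = ereal (\<phi>s v) + (ereal (v \<bullet> fst p) - snd p)" .
    qed
    also have "\<dots> = ereal (\<phi>s v) + (SUP p\<in>S. ereal (v \<bullet> fst p) - snd p)"
      by (rule SUP_ereal_add_right[OF Sne]) simp
    finally have "fconj f v = ereal (\<phi>s v) + (SUP p\<in>S. ereal (v \<bullet> fst p) - snd p)" .
    thus ?thesis by (cases "SUP p\<in>S. ereal (v \<bullet> fst p) - snd p") auto
  qed
  have "(\<lambda>v. fconj f v - ereal (\<phi>s v)) = (\<lambda>v. SUP p\<in>S. ereal (v \<bullet> fst p) - snd p)"
    using eq by (simp add: fun_eq_iff)
  thus ?thesis using convex_sup_affine[of fst snd S] by simp
qed

lemma III_IV:
  fixes \<phi> \<phi>s :: "'a::euclidean_space \<Rightarrow> real" and f :: "'a \<Rightarrow> ereal"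
  assumes pc: "\<And>v. ereal (\<phi>s v) = fconj (\<lambda>x. ereal (\<phi> x)) v" and pcv: "convex_on UNIV \<phi>"
    and pscv: "convex_on UNIV \<phi>s"
    and fp: "proper_fun f" and fl: "lsc_fun f" and fc: "ereal_convex f"
    and hc: "ereal_convex (\<lambda>v. fconj f v - ereal (\<phi>s v))"
  shows "\<exists>g. proper_fun g \<and> lsc_fun g \<and> ereal_convex g \<and> f = infconv g \<phi>"
proof -
  define h where "h v = fconj f v - ereal (\<phi>s v)" for v
  obtain x1 where x1: "f x1 \<noteq> \<infinity>" using fp by (auto simp: proper_fun_def)
  moreover have "f x1 \<noteq> -\<infinity>" using fp by (auto simp: proper_fun_def)
  ultimately obtain a1 where a1: "f x1 = ereal a1" by (cases "f x1") auto
  have hm: "h v \<noteq> -\<infinity>" for v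
  proof -
    have "ereal (v \<bullet> x1) - f x1 \<le> fconj f v" by (rule fconj_ge)
    hence "fconj f v \<noteq> -\<infinity>" using a1 by auto
    thus ?thesis by (cases "fconj f v") (auto simp: h_def)
  qed
  obtain c d where cd: "\<And>x. ereal (c \<bullet> x + d) \<le> f x" using minorant_exists[OF fp fl fc] by blast
  have "fconj f c \<le> ereal (- d)" unfolding fconj_def
  proof (rule SUP_least)
    fix y show "ereal (c \<bullet> y) - f y \<le> ereal (- d)" using cd[of y] by (cases "f y") auto
  qed
  hence hcfin: "h c \<noteq> \<infinity>" by (cases "fconj f c") (auto simp: h_def)
  hence hcr: "\<bar>h c\<bar> \<noteq> \<infinity>" using hm[of c] by auto
  have hp: "proper_fun h" using hm hcfin by (auto simp: proper_fun_def)
  have hl: "lsc_fun h" unfolding h_def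
    by (rule lsc_minus_cont[OF fconj_lsc convex_on_continuous[OF open_UNIV pscv]])
  have hcv: "ereal_convex h" using hc by (simp add: h_def[abs_def])
  have FMh: "fconj (fconj h) v = h v" for v by (rule FM[OF hp hl hcv])
  define g where "g = fconj h"
  have gm: "g y \<noteq> -\<infinity>" for y
  proof -
    have "ereal (c \<bullet> y) - h c \<le> g y" unfolding g_def using fconj_ge[of y c h] by (simp add: inner_commute)
    thus ?thesis using hcr by auto
  qed
  have gp: "proper_fun g"
  proof -
    have "\<exists>y. g y \<noteq> \<infinity>"
    proof (rule ccontr)
      assume "\<not> ?thesis"
      hence "g y = \<infinity>" for y by simp
      hence "fconj g c = -\<infinity>" by (simp add: fconj_def)
      moreover have "fconj g c = h c" using FMh by (simp add: g_def)
      ultimately show False using hm by simp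
    qed
    thus ?thesis using gm by (simp add: proper_fun_def)
  qed
  have gl: "lsc_fun g" unfolding g_def by (rule fconj_lsc)
  have gcv: "ereal_convex g" unfolding g_def by (rule fconj_convex)
  obtain c' d' where cd': "\<And>y. ereal (c' \<bullet> y + d') \<le> g y" using minorant_exists[OF gp gl gcv] by blast
  obtain y0 where y0: "g y0 \<noteq> \<infinity>" using gp by (auto simp: proper_fun_def)
  then obtain b0 where b0: "g y0 = ereal b0" using gm[of y0] by (cases "g y0") auto
  define k where "k = infconv g \<phi>"
  have kfin: "\<bar>k x\<bar> \<noteq> \<infinity>" for x
  proof -
    have "k x \<le> g y0 + ereal (\<phi> (x - y0))" unfolding k_def infconv_def by (rule INF_lower) simp
    hence up: "k x \<noteq> \<infinity>" using b0 by auto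
    have "ereal (c' \<bullet> x + d' - \<phi>s c') \<le> k x" unfolding k_def infconv_def
    proof (rule INF_greatest)
      fix y
      have "c' \<bullet> (x - y) - \<phi> (x - y) \<le> \<phi>s c'" by (rule FY[OF pc])
      hence "c' \<bullet> x + d' - \<phi>s c' \<le> (c' \<bullet> y + d') + \<phi> (x - y)" by (simp add: inner_diff_right)
      hence "ereal (c' \<bullet> x + d' - \<phi>s c') \<le> ereal (c' \<bullet> y + d') + ereal (\<phi> (x - y))" by simp
      also have "\<dots> \<le> g y + ereal (\<phi> (x - y))" using cd'[of y] by (intro add_right_mono)
      finally show "ereal (c' \<bullet> x + d' - \<phi>s c') \<le> g y + ereal (\<phi> (x - y))" .
    qed
    hence "k x \<noteq> -\<infinity>" by auto
    with up show ?thesis by auto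
  qed
  have kcv: "ereal_convex k" unfolding k_def by (rule infconv_convex[OF gcv gm pcv]) (use kfin k_def in auto)
  define K where "K x = real_of_ereal (k x)" for x
  have kK: "k = (\<lambda>x. ereal (K x))" using kfin by (simp add: fun_eq_iff K_def ereal_real)
  have Kcv: "convex_on UNIV K" unfolding K_def by (rule convex_real[OF kfin kcv])
  have kl: "lsc_fun k" unfolding kK by (rule lsc_cont[OF convex_on_continuous[OF open_UNIV Kcv]])
  have kp: "proper_fun k" unfolding proper_fun_def
  proof
    show "\<forall>x. k x \<noteq> -\<infinity>"
    proof
      fix x show "k x \<noteq> -\<infinity>" using kfin[of x] by (cases "k x") auto
    qed
    have "k 0 \<noteq> \<infinity>" using kfin[of 0] by (cases "k 0") auto
    thus "\<exists>x. k x \<noteq> \<infinity>" by blast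
  qed
  have conj: "fconj k v = fconj f v" for v
  proof -
    have "fconj k v = fconj g v + ereal (\<phi>s v)" unfolding k_def by (rule CONJ_INF[OF gm pc])
    also have "\<dots> = h v + ereal (\<phi>s v)" using FMh by (simp add: g_def)
    also have "\<dots> = fconj f v" by (cases "fconj f v") (auto simp: h_def)
    finally show ?thesis .
  qed
  have "k x = f x" for x
  proof -
    have "k x = fconj (fconj k) x" by (rule FM[OF kp kl kcv, symmetric])
    also have "\<dots> = fconj (fconj f) x"
    proof -
      have "fconj k = fconj f" using conj by (simp add: fun_eq_iff)
      thus ?thesis by simp
    qed
    also have "\<dots> = f x" by (rule FM[OF fp fl fc])
    finally show ?thesis .
  qed
  hence "f = infconv g \<phi>" by (simp add: fun_eq_iff k_def)
  thus ?thesis using gp gl gcv by blast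
qed


lemma IV_V:
  fixes \<phi> \<phi>s :: "'a::euclidean_space \<Rightarrow> real" and f g :: "'a \<Rightarrow> ereal"
  assumes pc: "\<And>v. ereal (\<phi>s v) = fconj (\<lambda>x. ereal (\<phi> x)) v" and pcv: "convex_on UNIV \<phi>"
    and pd: "\<And>x. (\<phi> has_derivative (\<lambda>h. D\<phi> x \<bullet> h)) (at x)" and pcoer: "super_coercive \<phi>"
    and pscv: "convex_on UNIV \<phi>s" and psd: "\<And>v. (\<phi>s has_derivative (\<lambda>h. D\<phi>s v \<bullet> h)) (at v)"
    and inv1: "\<And>x. D\<phi>s (D\<phi> x) = x"
    and fp: "proper_fun f" and fc: "ereal_convex f"
    and gp: "proper_fun g" and gl: "lsc_fun g" and gcv: "ereal_convex g" and feq: "f = infconv g \<phi>"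
  shows "a_weakly_convex \<phi> D\<phi>s (\<lambda>x. - f x)"
proof -
  obtain c d where cd: "\<And>y. ereal (c \<bullet> y + d) \<le> g y" using minorant_exists[OF gp gl gcv] by blast
  obtain y0 where y0: "g y0 \<noteq> \<infinity>" using gp by (auto simp: proper_fun_def)
  moreover have "g y0 \<noteq> -\<infinity>" using gp by (auto simp: proper_fun_def)
  ultimately obtain b0 where b0: "g y0 = ereal b0" by (cases "g y0") auto
  have fin: "\<bar>f x\<bar> \<noteq> \<infinity>" for x
  proof -
    have "f x \<le> g y0 + ereal (\<phi> (x - y0))" unfolding feq infconv_def by (rule INF_lower) simp
    hence "f x \<noteq> \<infinity>" using b0 by auto
    moreover have "f x \<noteq> -\<infinity>" using fp by (auto simp: proper_fun_def)
    ultimately show ?thesis by auto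
  qed
  define F where "F x = real_of_ereal (f x)" for x
  have fF: "f = (\<lambda>x. ereal (F x))" using fin by (simp add: fun_eq_iff F_def ereal_real)
  have cv: "convex_on UNIV F" unfolding F_def by (rule convex_real[OF fin fc])
  have cF: "continuous_on UNIV F" by (rule convex_on_continuous[OF open_UNIV cv])
  have cphi: "continuous_on UNIV \<phi>" by (rule convex_on_continuous[OF open_UNIV pcv])
  have cDs: "continuous_on UNIV D\<phi>s" by (rule GC[OF pscv psd])
  have mF: "(\<lambda>x. - f x) = (\<lambda>x. ereal (- F x))" by (simp add: fF)
  have lscm: "lsc_fun (\<lambda>x. ereal (- F x))" by (rule lsc_cont) (intro continuous_intros cF)
  have maj: "F w \<le> F x + \<phi> (w - x + D\<phi>s (- v)) - \<phi> (D\<phi>s (- v))"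
    if v: "v \<in> frechet_subdiff (\<lambda>x. ereal (- F x)) x" for x v w
  proof -
    obtain y where y: "infconv g \<phi> x = g y + ereal (\<phi> (x - y))"
      using ATT[OF gp gl cd FY[OF pc] pcoer cphi] by blast
    have M: "F u \<le> F x + \<phi> (u - y) - \<phi> (x - y)" for u
    proof -
      have "f u \<le> g y + ereal (\<phi> (u - y))" unfolding feq infconv_def by (rule INF_lower) simp
      moreover have "ereal (F x) = g y + ereal (\<phi> (x - y))" using y feq fF by metis
      ultimately show ?thesis using fF by (cases "g y") auto
    qed
    define z where "z = x - y"
    have "- v = D\<phi> z"
    proof (rule L1[OF pd])
      fix e :: real assume e: "e > 0"
      obtain d where d: "d > 0" "\<forall>y. norm (y - x) < d \<longrightarrow> - F x + v \<bullet> (y - x) - e * norm (y - x) \<le> - F y"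
        using v e unfolding frechet_real by blast
      show "\<exists>d>0. \<forall>h. norm h < d \<longrightarrow> - v \<bullet> h - e * norm h \<le> \<phi> (z + h) - \<phi> z"
      proof (intro exI[of _ d] conjI allI impI)
        show "d > 0" by (rule d(1))
        fix h :: 'a assume h: "norm h < d"
        have "norm ((x - h) - x) < d" using h by simp
        hence "- F x + v \<bullet> ((x - h) - x) - e * norm ((x - h) - x) \<le> - F (x - h)" using d(2) by blast
        hence A: "F (x - h) \<le> F x + v \<bullet> h + e * norm h" by simp
        have B: "2 * F x \<le> F (x + h) + F (x - h)" by (rule midpoint_cv[OF cv])
        have C: "F (x + h) \<le> F x + \<phi> (z + h) - \<phi> z" using M[of "x + h"] by (simp add: z_def algebra_simps)
        show "- v \<bullet> h - e * norm h \<le> \<phi> (z + h) - \<phi> z" using A B C by simp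
      qed
    qed
    hence zeq: "D\<phi>s (- v) = z" by (simp add: inv1)
    show ?thesis using M[of w] by (simp add: zeq z_def algebra_simps)
  qed
  show ?thesis unfolding a_weakly_convex_def mF
  proof (intro conjI allI impI)
    show "proper_fun (\<lambda>x. ereal (- F x))" by (simp add: proper_fun_def)
    show "lsc_fun (\<lambda>x. ereal (- F x))" by (rule lscm)
    fix xb vb w assume "vb \<in> limiting_subdiff (\<lambda>x. ereal (- F x)) xb"
    then obtain xs vs where xs: "xs \<longlonglongrightarrow> xb" "(\<lambda>k. ereal (- F (xs k))) \<longlonglongrightarrow> ereal (- F xb)"
      "\<And>k. vs k \<in> frechet_subdiff (\<lambda>x. ereal (- F x)) (xs k)" "vs \<longlonglongrightarrow> vb"
      unfolding limiting_subdiff_def by blast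
    have Fl: "(\<lambda>k. F (xs k)) \<longlonglongrightarrow> F xb"
    proof -
      have "(\<lambda>k. - F (xs k)) \<longlonglongrightarrow> - F xb" using xs(2) by simp
      from tendsto_minus[OF this] show ?thesis by simp
    qed
    have Zl: "(\<lambda>k. D\<phi>s (- vs k)) \<longlonglongrightarrow> D\<phi>s (- vb)"
      by (rule continuous_on_tendsto_compose[OF cDs]) (auto intro: tendsto_minus xs(4))
    have l1: "(\<lambda>k. \<phi> (w - xs k + D\<phi>s (- vs k))) \<longlonglongrightarrow> \<phi> (w - xb + D\<phi>s (- vb))"
    proof (rule continuous_on_tendsto_compose[OF cphi])
      show "(\<lambda>k. w - xs k + D\<phi>s (- vs k)) \<longlonglongrightarrow> w - xb + D\<phi>s (- vb)"
        by (intro tendsto_intros xs(1) Zl)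
    qed auto
    have l2: "(\<lambda>k. \<phi> (D\<phi>s (- vs k))) \<longlonglongrightarrow> \<phi> (D\<phi>s (- vb))"
      by (rule continuous_on_tendsto_compose[OF cphi Zl]) auto
    have "(\<lambda>k. F (xs k) + \<phi> (w - xs k + D\<phi>s (- vs k)) - \<phi> (D\<phi>s (- vs k)))
        \<longlonglongrightarrow> F xb + \<phi> (w - xb + D\<phi>s (- vb)) - \<phi> (D\<phi>s (- vb))"
      by (intro tendsto_intros Fl l1 l2)
    hence "F w \<le> F xb + \<phi> (w - xb + D\<phi>s (- vb)) - \<phi> (D\<phi>s (- vb))"
      by (rule LIMSEQ_le_const) (use maj xs(3) in blast)
    thus "ereal (- F xb) - ereal (\<phi> (w - xb + D\<phi>s (- vb))) + ereal (\<phi> (D\<phi>s (- vb))) \<le> ereal (- F w)"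
      by simp
  qed
qed

theorem mainTheorem13:
  fixes \<phi> \<phi>s :: "'a::euclidean_space \<Rightarrow> real"
    and D\<phi> D\<phi>s :: "'a \<Rightarrow> 'a"
    and f :: "'a \<Rightarrow> ereal"
  assumes phi_convex: "convex_on UNIV \<phi>"
    and phi_strict: "strictly_convex \<phi>"
    and phi_grad: "\<And>x. (\<phi> has_derivative (\<lambda>h. D\<phi> x \<bullet> h)) (at x)"
    and phi_coercive: "super_coercive \<phi>"
    and phis_conj: "\<And>v. ereal (\<phi>s v) = fconj (\<lambda>x. ereal (\<phi> x)) v"
    and phis_convex: "convex_on UNIV \<phi>s"
    and phis_strict: "strictly_convex \<phi>s"
    and phis_grad: "\<And>v. (\<phi>s has_derivative (\<lambda>h. D\<phi>s v \<bullet> h)) (at v)"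
    and phis_coercive: "super_coercive \<phi>s"
    and grad_inv1: "\<And>x. D\<phi>s (D\<phi> x) = x"
    and grad_inv2: "\<And>v. D\<phi> (D\<phi>s v) = v"
    and f_proper: "proper_fun f" and f_lsc: "lsc_fun f" and f_convex: "ereal_convex f"
  shows "(a_smooth \<phi> D\<phi>s f \<longleftrightarrow> left_Phi_convex \<phi> (\<lambda>x. - f x))
       \<and> (left_Phi_convex \<phi> (\<lambda>x. - f x) \<longleftrightarrow> ereal_convex (\<lambda>v. fconj f v - ereal (\<phi>s v)))
       \<and> (ereal_convex (\<lambda>v. fconj f v - ereal (\<phi>s v)) \<longleftrightarrow>
            (\<exists>g. proper_fun g \<and> lsc_fun g \<and> ereal_convex g \<and> f = infconv g \<phi>))
       \<and> ((\<exists>g. proper_fun g \<and> lsc_fun g \<and> ereal_convex g \<and> f = infconv g \<phi>) \<longleftrightarrow>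
            a_weakly_convex \<phi> D\<phi>s (\<lambda>x. - f x))"
proof -
  let ?i = "a_smooth \<phi> D\<phi>s f"
  let ?ii = "left_Phi_convex \<phi> (\<lambda>x. - f x)"
  let ?iii = "ereal_convex (\<lambda>v. fconj f v - ereal (\<phi>s v))"
  let ?iv = "\<exists>g. proper_fun g \<and> lsc_fun g \<and> ereal_convex g \<and> f = infconv g \<phi>"
  let ?v = "a_weakly_convex \<phi> D\<phi>s (\<lambda>x. - f x)"
  have i_v: "?i \<Longrightarrow> ?v" by (simp add: a_smooth_def)
  have v_i: "?v \<Longrightarrow> ?i" by (rule V_I[OF phi_convex phi_grad grad_inv2 f_proper f_convex])
  have v_ii: "?v \<Longrightarrow> ?ii" by (rule V_II[OF f_proper f_convex])
  have ii_iii: "?ii \<Longrightarrow> ?iii"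
  proof -
    assume ?ii
    then obtain S where S: "\<And>x. - f x = (SUP p\<in>S. ereal (- \<phi> (x - fst p)) - snd p)"
      unfolding left_Phi_convex_def by blast
    show ?iii by (rule II_III[OF phis_conj f_proper S])
  qed
  have iii_iv: "?iii \<Longrightarrow> ?iv"
    by (rule III_IV[OF phis_conj phi_convex phis_convex f_proper f_lsc f_convex])
  have iv_v: "?iv \<Longrightarrow> ?v"
  proof -
    assume ?iv
    then obtain g where g: "proper_fun g" "lsc_fun g" "ereal_convex g" "f = infconv g \<phi>" by blast
    show ?v by (rule IV_V[OF phis_conj phi_convex phi_grad phi_coercive phis_convex phis_grad grad_inv1
          f_proper f_convex g])
  qed
  show ?thesis using i_v v_i v_ii ii_iii iii_iv iv_v by blast
qed

end
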